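(* Let $\mathcal{X}$ be a measurable space, $\mathcal{Y}$ a finite set, $\varphi\colon\mathcal{Y}\to\mathbb{R}^p$, and $\rho$ a probability distribution on $\mathcal{X}\times\mathcal{Y}$. Let $L\colon\mathcal{Y}\times\mathcal{Y}\to\mathbb{R}_+$ satisfy $L(\hat y,y)=\langle\varphi(\hat y),V\varphi(y)+b\rangle+c(y)$ for some $V\in\mathbb{R}^{p\times p}$, $b\in\mathbb{R}^p$, $c\colon\mathcal{Y}\to\mathbb{R}$. Let $\Psi\colon\mathbb{R}^p\to\mathbb{R}\cup\{\infty\}$ be of Legendre type and $\frac1\beta$-strongly convex over $\mathcal{C}$ w.r.t. a norm $\|\cdot\|$ (with $\beta>0$), where $\mathcal{C}$ is a closed convex set with $\varphi(\mathcal{Y})\subseteq\mathcal{C}\subseteq\operatorname{dom}(\Psi)$. Let $\sigma:=\sup_{\hat y\in\mathcal{Y}}\|V^\top\varphi(\hat y)\|_*$, where $\|\cdot\|_*$ is the dual norm, and assume $\sigma>0$. Then for every measurable $g\colon\mathcal{X}\to\mathbb{R}^p$, $$\frac{\delta\mathcal{L}(\hat y_L\circ P^\Psi_{\mathcal{C}}\circ g)^2}{8\beta\sigma^2}\le\delta\mathcal{S}^\Psi_{\mathcal{C}}(g).$$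
   Context: Fenchel conjugate: $\Omega^*(\theta)=\sup_{u\in\operatorname{dom}(\Omega)}\langle u,\theta\rangle-\Omega(u)$. Set $\Omega=\Psi+I_{\mathcal{C}}$ ($I_{\mathcal{C}}$ the indicator of $\mathcal{C}$). The projection-based loss is $S^\Psi_{\mathcal{C}}(\theta,y)=\Omega^*(\theta)+\Omega(\varphi(y))-\langle\theta,\varphi(y)\rangle$. The projection layer is $P^\Psi_{\mathcal{C}}(\theta)=\operatorname{argmin}_{u\in\mathcal{C}}D_\Psi(u,\nabla\Psi^*(\theta))$ with $D_\Psi(u,v)=\Psi(u)-\Psi(v)-\langle\nabla\Psi(v),u-v\rangle$; under the hypotheses it equals $\nabla\Omega^*(\theta)$. "$\frac1\beta$-strongly convex over $\mathcal{C}$ w.r.t. $\|\cdot\|$" means $\Psi(tu+(1-t)v)\le t\Psi(u)+(1-t)\Psi(v)-\frac{t(1-t)}{2\beta}\|u-v\|^2$ for all $u,v\in\mathcal{C}$, $t\in[0,1]$. Calibrated decoding: $\hat y_L(u)\in\operatorname{argmin}_{y'\in\mathcal{Y}}\langle\varphi(y'),Vu+b\rangle$ (ties broken by a fixed rule). Risks: $\mathcal{L}(f)=\mathbb{E}_{(X,Y)\sim\rho}L(f(X),Y)$ for $f\colon\mathcal{X}\to\mathcal{Y}$, $\mathcal{S}^\Psi_{\mathcal{C}}(g)=\mathbb{E}_{(X,Y)\sim\rho}S^\Psi_{\mathcal{C}}(g(X),Y)$; excess risks $\delta\mathcal{L}(f)=\mathcal{L}(f)-\inf_{f'}\mathcal{L}(f')$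 and $\delta\mathcal{S}^\Psi_{\mathcal{C}}(g)=\mathcal{S}^\Psi_{\mathcal{C}}(g)-\inf_{g'}\mathcal{S}^\Psi_{\mathcal{C}}(g')$, infima over measurable maps. *)

theory Defs
  imports "HOL-Probability.Probability"
begin

definition is_norm :: "(real ^ 'p \<Rightarrow> real) \<Rightarrow> bool" where
  "is_norm N \<longleftrightarrow> (\<forall>x. 0 \<le> N x) \<and> (\<forall>x. N x = 0 \<longleftrightarrow> x = 0)
     \<and> (\<forall>a x. N (a *\<^sub>R x) = \<bar>a\<bar> * N x) \<and> (\<forall>x y. N (x + y) \<le> N x + N y)"

definition dual_norm :: "(real ^ 'p \<Rightarrow> real) \<Rightarrow> real ^ 'p \<Rightarrow> real" where
  "dual_norm N z = (SUP u\<in>{u. N u \<le> 1}. z \<bullet> u)"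

definition edom :: "(real ^ 'p \<Rightarrow> ereal) \<Rightarrow> (real ^ 'p) set" where
  "edom \<Psi> = {u. \<Psi> u < \<infinity>}"

definition grad :: "(real ^ 'p \<Rightarrow> real) \<Rightarrow> real ^ 'p \<Rightarrow> real ^ 'p" where
  "grad f x = (SOME g. (f has_derivative (\<lambda>h. g \<bullet> h)) (at x))"

definition proper_closed_convex :: "(real ^ 'p \<Rightarrow> ereal) \<Rightarrow> bool" where
  "proper_closed_convex \<Psi> \<longleftrightarrow>
     (\<forall>u. \<Psi> u \<noteq> -\<infinity>) \<and> edom \<Psi> \<noteq> {}
     \<and> convex (edom \<Psi>) \<and> convex_on (edom \<Psi>) (\<lambda>u. real_of_ereal (\<Psi> u))
     \<and> closed {(u, t::real). \<Psi> u \<le> ereal t}"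

definition essentially_smooth :: "(real ^ 'p \<Rightarrow> ereal) \<Rightarrow> bool" where
  "essentially_smooth \<Psi> \<longleftrightarrow>
     interior (edom \<Psi>) \<noteq> {}
     \<and> (\<forall>x\<in>interior (edom \<Psi>). (\<lambda>u. real_of_ereal (\<Psi> u)) differentiable (at x))
     \<and> (\<forall>s x. (\<forall>k. s k \<in> interior (edom \<Psi>)) \<longrightarrow> s \<longlonglongrightarrow> x \<longrightarrow>
              x \<in> frontier (interior (edom \<Psi>)) \<longrightarrow>
              filterlim (\<lambda>k. norm (grad (\<lambda>u. real_of_ereal (\<Psi> u)) (s k))) at_top sequentially)"

definition strictly_convex_on :: "(real ^ 'p) set \<Rightarrow> (real ^ 'p \<Rightarrow> real) \<Rightarrow> bool" where
  "strictly_convex_on S f \<longleftrightarrow>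
     (\<forall>u\<in>S. \<forall>v\<in>S. \<forall>t\<in>{0<..<1}. u \<noteq> v \<longrightarrow>
        f (t *\<^sub>R u + (1 - t) *\<^sub>R v) < t * f u + (1 - t) * f v)"

definition legendre_type :: "(real ^ 'p \<Rightarrow> ereal) \<Rightarrow> bool" where
  "legendre_type \<Psi> \<longleftrightarrow> proper_closed_convex \<Psi> \<and> essentially_smooth \<Psi>
     \<and> strictly_convex_on (interior (edom \<Psi>)) (\<lambda>u. real_of_ereal (\<Psi> u))"

definition strongly_convex_over ::
  "real \<Rightarrow> (real ^ 'p \<Rightarrow> real) \<Rightarrow> (real ^ 'p) set \<Rightarrow> (real ^ 'p \<Rightarrow> ereal) \<Rightarrow> bool" where
  "strongly_convex_over \<beta> N C \<Psi> \<longleftrightarrow>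
     (\<forall>u\<in>C. \<forall>v\<in>C. \<forall>t\<in>{0..1}.
        \<Psi> (t *\<^sub>R u + (1 - t) *\<^sub>R v)
          \<le> ereal t * \<Psi> u + ereal (1 - t) * \<Psi> v
             - ereal (t * (1 - t) / (2 * \<beta>) * (N (u - v))\<^sup>2))"

definition Omega :: "(real ^ 'p \<Rightarrow> ereal) \<Rightarrow> (real ^ 'p) set \<Rightarrow> real ^ 'p \<Rightarrow> ereal" where
  "Omega \<Psi> C u = (if u \<in> C then \<Psi> u else \<infinity>)"

definition Omega_conj :: "(real ^ 'p \<Rightarrow> ereal) \<Rightarrow> (real ^ 'p) set \<Rightarrow> real ^ 'p \<Rightarrow> ereal" where
  "Omega_conj \<Psi> C \<theta> = (SUP u\<in>edom (Omega \<Psi> C). ereal (u \<bullet> \<theta>) - Omega \<Psi> C u)"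

definition proj_loss ::
  "(real ^ 'p \<Rightarrow> ereal) \<Rightarrow> (real ^ 'p) set \<Rightarrow> ('y \<Rightarrow> real ^ 'p) \<Rightarrow> real ^ 'p \<Rightarrow> 'y \<Rightarrow> ereal" where
  "proj_loss \<Psi> C \<phi> \<theta> y = Omega_conj \<Psi> C \<theta> + Omega \<Psi> C (\<phi> y) - ereal (\<theta> \<bullet> \<phi> y)"

text \<open>Projection layer P(theta), realised as the gradient of Omega* (which is the
  Bregman projection argmin over C of D_Psi(u, grad Psi*(theta)) under the hypotheses).\<close>
definition proj_layer :: "(real ^ 'p \<Rightarrow> ereal) \<Rightarrow> (real ^ 'p) set \<Rightarrow> real ^ 'p \<Rightarrow> real ^ 'p" where
  "proj_layer \<Psi> C \<theta> = grad (\<lambda>\<eta>. real_of_ereal (Omega_conj \<Psi> C \<eta>)) \<theta>"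

text \<open>Calibrated decoding; ties broken by taking the least minimiser w.r.t. the
  (fixed) linear order on the output type.\<close>
definition decode ::
  "('y::{finite,linorder} \<Rightarrow> real ^ 'p) \<Rightarrow> real ^ 'p ^ 'p \<Rightarrow> real ^ 'p \<Rightarrow> real ^ 'p \<Rightarrow> 'y" where
  "decode \<phi> V b u = (LEAST y. \<forall>y'. \<phi> y \<bullet> (V *v u + b) \<le> \<phi> y' \<bullet> (V *v u + b))"

definition target_risk :: "('x \<times> 'y) measure \<Rightarrow> ('y \<Rightarrow> 'y \<Rightarrow> real) \<Rightarrow> ('x \<Rightarrow> 'y) \<Rightarrow> real" where
  "target_risk \<rho> L f = (\<integral>z. L (f (fst z)) (snd z) \<partial>\<rho>)"

definition excess_target_risk ::
  "'x measure \<Rightarrow> ('x \<times> 'y) measure \<Rightarrow> ('y \<Rightarrow> 'y \<Rightarrow> real) \<Rightarrow> ('x \<Rightarrow> 'y) \<Rightarrow> real" where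
  "excess_target_risk MX \<rho> L f =
     target_risk \<rho> L f - (INF f'\<in>measurable MX (count_space UNIV). target_risk \<rho> L f')"

definition surrogate_risk ::
  "('x \<times> 'y) measure \<Rightarrow> (real ^ 'p \<Rightarrow> ereal) \<Rightarrow> (real ^ 'p) set \<Rightarrow> ('y \<Rightarrow> real ^ 'p)
     \<Rightarrow> ('x \<Rightarrow> real ^ 'p) \<Rightarrow> ennreal" where
  "surrogate_risk \<rho> \<Psi> C \<phi> g = (\<integral>\<^sup>+z. e2ennreal (proj_loss \<Psi> C \<phi> (g (fst z)) (snd z)) \<partial>\<rho>)"

definition excess_surrogate_risk ::
  "'x measure \<Rightarrow> ('x \<times> 'y) measure \<Rightarrow> (real ^ 'p \<Rightarrow> ereal) \<Rightarrow> (real ^ 'p) set \<Rightarrow> ('y \<Rightarrow> real ^ 'p)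
     \<Rightarrow> ('x \<Rightarrow> real ^ 'p) \<Rightarrow> ennreal" where
  "excess_surrogate_risk MX \<rho> \<Psi> C \<phi> g =
     surrogate_risk \<rho> \<Psi> C \<phi> g - (INF g'\<in>borel_measurable MX. surrogate_risk \<rho> \<Psi> C \<phi> g')"

end

theory Submission
  imports Defs
begin

lemma isn_0: "is_norm N \<Longrightarrow> N 0 = 0"
  unfolding is_norm_def by auto
lemma isn_nonneg: "is_norm N \<Longrightarrow> 0 \<le> N x"
  unfolding is_norm_def by auto
lemma isn_scale: "is_norm N \<Longrightarrow> N (a *\<^sub>R x) = \<bar>a\<bar> * N x"
  unfolding is_norm_def by auto
lemma isn_tri: "is_norm N \<Longrightarrow> N (x + y) \<le> N x + N y"
  unfolding is_norm_def by auto
lemma isn_zero_iff: "is_norm N \<Longrightarrow> N x = 0 \<longleftrightarrow> x = 0"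
  unfolding is_norm_def by auto
lemma isn_minus: "is_norm N \<Longrightarrow> N (- x) = N x"
  using isn_scale[of N "-1" x] by simp
lemma isn_commute: "is_norm N \<Longrightarrow> N (x - y) = N (y - x)"
  using isn_minus[of N "x - y"] by simp
lemma isn_pos: "is_norm N \<Longrightarrow> x \<noteq> 0 \<Longrightarrow> 0 < N x"
  using isn_nonneg[of N x] isn_zero_iff[of N x] by linarith

lemma isn_sum: assumes "is_norm N" "finite A" shows "N (sum f A) \<le> (\<Sum>i\<in>A. N (f i))"
  using assms(2)
proof (induction A rule: finite_induct)
  case empty then show ?case using isn_0[OF assms(1)] by simp
next
  case (insert a A)
  then show ?case using isn_tri[OF assms(1), of "f a" "sum f A"] by simp
qed

lemma isn_upper: assumes "is_norm N"
  shows "\<exists>K>0. \<forall>x::real^'p. N x \<le> K * norm x"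
proof -
  define K where "K = (\<Sum>b\<in>(Basis::(real^'p) set). N b) + 1"
  have Kpos: "K > 0" unfolding K_def using isn_nonneg[OF assms] by (simp add: sum_nonneg add_nonneg_pos)
  have "N x \<le> K * norm x" for x :: "real^'p"
  proof -
    have "N x = N (\<Sum>b\<in>Basis. (x \<bullet> b) *\<^sub>R b)" by (simp add: euclidean_representation)
    also have "\<dots> \<le> (\<Sum>b\<in>Basis. N ((x \<bullet> b) *\<^sub>R b))" by (rule isn_sum[OF assms]) simp
    also have "\<dots> = (\<Sum>b\<in>Basis. \<bar>x \<bullet> b\<bar> * N b)" using isn_scale[OF assms] by simp
    also have "\<dots> \<le> (\<Sum>b\<in>(Basis::(real^'p) set). norm x * N b)"
      apply (rule sum_mono) apply (rule mult_right_mono)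
      using Basis_le_norm isn_nonneg[OF assms] by auto
    also have "\<dots> = norm x * (K - 1)" unfolding K_def by (simp add: sum_distrib_left)
    also have "\<dots> \<le> K * norm x" by (simp add: algebra_simps)
    finally show ?thesis .
  qed
  then show ?thesis using Kpos by blast
qed

lemma isn_cont: assumes "is_norm N" shows "continuous_on UNIV (N :: real^'p \<Rightarrow> real)"
proof -
  obtain K where K: "K > 0" "\<And>x::real^'p. N x \<le> K * norm x" using isn_upper[OF assms] by blast
  have "\<bar>N x - N y\<bar> \<le> K * dist x y" for x y :: "real^'p"
  proof -
    have "N x \<le> N (x - y) + N y" using isn_tri[OF assms, of "x - y" y] by simp
    moreover have "N y \<le> N (y - x) + N x" using isn_tri[OF assms, of "y - x" x] by simp
    moreover have "N (x - y) \<le> K * dist x y" using K(2)[of "x - y"] by (simp add: dist_norm)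
    moreover have "N (y - x) = N (x - y)" using isn_commute[OF assms] by simp
    ultimately show ?thesis by linarith
  qed
  then show ?thesis unfolding continuous_on_iff
    apply (intro ballI allI impI)
    subgoal for x e
      apply (rule exI[of _ "e / K"]) using K(1)
      by (auto simp: dist_real_def field_simps dest: spec2[of _ _ x] intro: le_less_trans)
    done
qed

lemma isn_lower: assumes "is_norm N"
  shows "\<exists>c>0. \<forall>x::real^'p. c * norm x \<le> N x"
proof -
  obtain b :: "real^'p" where b: "b \<in> Basis" using nonempty_Basis by blast
  have ne: "sphere (0::real^'p) 1 \<noteq> {}" using b by (auto simp: sphere_def intro!: exI[of _ b])
  obtain x0 where x0: "x0 \<in> sphere (0::real^'p) 1" "\<And>y. y \<in> sphere 0 1 \<Longrightarrow> N x0 \<le> N y"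
    using continuous_attains_inf[OF compact_sphere ne continuous_on_subset[OF isn_cont[OF assms]]] by blast
  have c: "N x0 > 0" using x0(1) isn_pos[OF assms, of x0] by (metis mem_sphere_0 norm_zero zero_neq_one)
  have "N x0 * norm x \<le> N x" for x :: "real^'p"
  proof (cases "x = 0")
    case True then show ?thesis using isn_0[OF assms] by simp
  next
    case False
    then have "N x0 \<le> N ((1 / norm x) *\<^sub>R x)" by (intro x0(2)) (simp add: sphere_def)
    also have "\<dots> = N x / norm x" using isn_scale[OF assms] by simp
    finally show ?thesis using False by (simp add: field_simps)
  qed
  then show ?thesis using c by blast
qed

lemma dual_le: assumes "is_norm N" shows "(z::real^'p) \<bullet> w \<le> dual_norm N z * N w"
proof (cases "w = 0")
  case True then show ?thesis using isn_0[OF assms] by simp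
next
  case False
  obtain c where c: "c > 0" "\<And>x::real^'p. c * norm x \<le> N x" using isn_lower[OF assms] by blast
  have Nw: "N w > 0" using isn_pos[OF assms False] .
  define u where "u = (1 / N w) *\<^sub>R w"
  have Nu: "N u \<le> 1" unfolding u_def using isn_scale[OF assms] Nw by simp
  have bdd: "bdd_above ((\<lambda>u. z \<bullet> u) ` {u. N u \<le> 1})"
  proof (rule bdd_aboveI2)
    fix v :: "real^'p" assume "v \<in> {u. N u \<le> 1}"
    then have "c * norm v \<le> 1" using c(2)[of v] by simp
    then have "norm v \<le> 1 / c" using c(1) by (simp add: field_simps)
    then have "norm z * norm v \<le> norm z * (1 / c)" by (rule mult_left_mono) simp
    then show "z \<bullet> v \<le> norm z / c" using norm_cauchy_schwarz[of z v] by simp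
  qed
  have "z \<bullet> u \<le> dual_norm N z" unfolding dual_norm_def
    by (rule cSUP_upper[OF _ bdd]) (use Nu in simp)
  moreover have "z \<bullet> w = N w * (z \<bullet> u)" unfolding u_def using Nw by simp
  ultimately show ?thesis using Nw by (simp add: mult.commute mult_left_mono)
qed

lemma quad_bound: assumes "(k::real) > 0" shows "D * d - k * d\<^sup>2 \<le> D\<^sup>2 / (4 * k)"
proof -
  have "0 \<le> (2 * k * d - D)\<^sup>2" by simp
  then have "0 \<le> 4*k*k*d\<^sup>2 - 4*k*D*d + D\<^sup>2" by (simp add: power2_eq_square algebra_simps)
  then have "4*k*(D * d - k * d\<^sup>2) \<le> D\<^sup>2" by (simp add: power2_eq_square algebra_simps)
  then show ?thesis using assms by (simp add: field_simps mult.commute)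
qed

lemma inv_aux: assumes "(P::real) > 0" "a / P < real M0" shows "a * inverse (real (Suc M0)) < P"
proof -
  have "a < P * real M0" using assms by (simp add: divide_less_eq mult.commute)
  also have "\<dots> < P * real (Suc M0)" using assms(1) by simp
  finally have "a < P * real (Suc M0)" .
  then show ?thesis by (simp add: field_simps)
qed
locale cvx =
  fixes \<Psi> :: "real^'p \<Rightarrow> ereal" and N :: "real^'p \<Rightarrow> real" and C :: "(real^'p) set" and \<beta> :: real
  assumes isn: "is_norm N" and beta: "\<beta> > 0" and strong: "strongly_convex_over \<beta> N C \<Psi>"
    and Ccl: "closed C" and Ccv: "convex C" and Cne: "C \<noteq> {}" and Cdom: "C \<subseteq> edom \<Psi>"
    and notminf: "\<And>u. \<Psi> u \<noteq> -\<infinity>" and epi: "closed {(u, t::real). \<Psi> u \<le> ereal t}"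
begin

definition Om where "Om u = real_of_ereal (\<Psi> u)"
definition val where "val \<theta> u = u \<bullet> \<theta> - Om u"

lemma Psi_fin: "u \<in> C \<Longrightarrow> \<Psi> u = ereal (Om u)"
  using Cdom notminf[of u] unfolding Om_def edom_def by (cases "\<Psi> u") auto

lemma cc: obtains c where "c > 0" "\<And>x. c * norm x \<le> N x"
  using isn_lower[OF isn] by blast

lemma conv_mem: "u \<in> C \<Longrightarrow> v \<in> C \<Longrightarrow> 0 \<le> t \<Longrightarrow> t \<le> 1 \<Longrightarrow> t *\<^sub>R u + (1 - t) *\<^sub>R v \<in> C"
  using Ccv unfolding convex_def by auto

lemma strong_real:
  assumes "u \<in> C" "v \<in> C" "0 \<le> t" "t \<le> 1"
  shows "Om (t *\<^sub>R u + (1 - t) *\<^sub>R v) \<le> t * Om u + (1 - t) * Om v - t * (1 - t) / (2 * \<beta>) * (N (u - v))\<^sup>2"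
proof -
  have w: "t *\<^sub>R u + (1 - t) *\<^sub>R v \<in> C" using conv_mem assms by blast
  have "\<Psi> (t *\<^sub>R u + (1 - t) *\<^sub>R v) \<le> ereal t * \<Psi> u + ereal (1 - t) * \<Psi> v
             - ereal (t * (1 - t) / (2 * \<beta>) * (N (u - v))\<^sup>2)"
    using strong assms unfolding strongly_convex_over_def by auto
  then show ?thesis using Psi_fin[OF w] Psi_fin[OF assms(1)] Psi_fin[OF assms(2)] by simp
qed

lemma val_mid:
  assumes "u \<in> C" "v \<in> C" "0 \<le> t" "t \<le> 1"
  shows "t * val \<theta> u + (1 - t) * val \<theta> v + t * (1 - t) / (2 * \<beta>) * (N (u - v))\<^sup>2
           \<le> val \<theta> (t *\<^sub>R u + (1 - t) *\<^sub>R v)"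
  using strong_real[OF assms] unfolding val_def by (simp add: inner_add_left algebra_simps)

lemma convex_Om: "convex_on C Om"
proof (intro convex_onI Ccv)
  fix t :: real and x y assume "0 < t" "t < 1" "x \<in> C" "y \<in> C"
  then have "Om ((1 - t) *\<^sub>R x + t *\<^sub>R y) \<le> (1 - t) * Om x + (1 - (1 - t)) * Om y
       - (1 - t) * (1 - (1 - t)) / (2 * \<beta>) * (N (x - y))\<^sup>2"
    using strong_real[of x y "1 - t"] by simp
  moreover have "0 \<le> (1 - t) * (1 - (1 - t)) / (2 * \<beta>) * (N (x - y))\<^sup>2"
    using \<open>0 < t\<close> \<open>t < 1\<close> beta by simp
  ultimately show "Om ((1 - t) *\<^sub>R x + t *\<^sub>R y) \<le> (1 - t) * Om x + t * Om y" by simp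
qed

definition Epi where "Epi = {p :: (real^'p) \<times> real. fst p \<in> C \<and> \<Psi> (fst p) \<le> ereal (snd p)}"

lemma Epi_closed: "closed Epi"
proof -
  have "Epi = (C \<times> UNIV) \<inter> {(u, t::real). \<Psi> u \<le> ereal t}" unfolding Epi_def by auto
  then show ?thesis using closed_Times[OF Ccl closed_UNIV] epi closed_Int by metis
qed

lemma Epi_convex: "convex Epi"
  unfolding convex_def
proof (intro ballI allI impI)
  fix x y :: "(real^'p) \<times> real" and a b :: real
  assume x: "x \<in> Epi" and y: "y \<in> Epi" and ab: "0 \<le> a" "0 \<le> b" "a + b = 1"
  then have b: "b = 1 - a" "a \<le> 1" by auto
  have xC: "fst x \<in> C" "Om (fst x) \<le> snd x" using x Psi_fin unfolding Epi_def by auto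
  have yC: "fst y \<in> C" "Om (fst y) \<le> snd y" using y Psi_fin unfolding Epi_def by auto
  have m: "a *\<^sub>R fst x + b *\<^sub>R fst y \<in> C" using conv_mem xC yC ab b by auto
  have "Om (a *\<^sub>R fst x + b *\<^sub>R fst y) \<le> a * Om (fst x) + b * Om (fst y)"
  proof -
    have "Om (a *\<^sub>R fst x + (1 - a) *\<^sub>R fst y) \<le> a * Om (fst x) + (1 - a) * Om (fst y)
        - a * (1 - a) / (2 * \<beta>) * (N (fst x - fst y))\<^sup>2" using strong_real xC yC ab b by blast
    moreover have "0 \<le> a * (1 - a) / (2 * \<beta>) * (N (fst x - fst y))\<^sup>2" using ab b beta by simp
    ultimately show ?thesis using b by simp
  qed
  also have "\<dots> \<le> a * snd x + b * snd y"
    using xC yC ab by (intro add_mono mult_left_mono) auto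
  finally show "a *\<^sub>R x + b *\<^sub>R y \<in> Epi" unfolding Epi_def using m Psi_fin[OF m] by simp
qed

lemma sep:
  assumes m: "m \<in> C" and e: "e > 0"
  shows "\<exists>\<theta>. \<forall>u\<in>C. val \<theta> u \<le> val \<theta> m + e"
proof -
  have "(m, Om m - e) \<notin> Epi" unfolding Epi_def using Psi_fin[OF m] e by simp
  then obtain a bb where ab: "inner a (m, Om m - e) < bb" "\<forall>x\<in>Epi. inner a x > bb"
    using separating_hyperplane_closed_point[OF Epi_convex Epi_closed] by blast
  obtain a1 a2 where a: "a = (a1, a2)" by (cases a)
  have "(m, Om m) \<in> Epi" unfolding Epi_def using Psi_fin[OF m] m by simp
  then have 1: "a1 \<bullet> m + a2 * Om m > bb" using ab(2) a by auto
  have 2: "a1 \<bullet> m + a2 * (Om m - e) < bb" using ab(1) a by simp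
  have a2: "a2 > 0"
  proof -
    have "a2 * e > 0" using 1 2 by (simp add: algebra_simps)
    then show ?thesis using e by (simp add: zero_less_mult_iff)
  qed
  define \<theta> where "\<theta> = (- 1 / a2) *\<^sub>R a1"
  have "val \<theta> u \<le> val \<theta> m + e" if u: "u \<in> C" for u
  proof -
    have "(u, Om u) \<in> Epi" unfolding Epi_def using Psi_fin[OF u] u by simp
    then have "a1 \<bullet> u + a2 * Om u > bb" using ab(2) a by auto
    with 2 have "a1 \<bullet> u + a2 * Om u > a1 \<bullet> m + a2 * (Om m - e)" by simp
    then have "(a1 \<bullet> u + a2 * Om u) / a2 > (a1 \<bullet> m + a2 * (Om m - e)) / a2"
      using divide_strict_right_mono a2 by blast
    then have "(a1 \<bullet> u) / a2 + Om u > (a1 \<bullet> m) / a2 + (Om m - e)"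
      using a2 by (simp add: add_divide_distrib)
    then show ?thesis unfolding val_def \<theta>_def by (simp add: inner_commute)
  qed
  then show ?thesis by blast
qed

lemma Om_lower: obtains K \<theta>0 where "\<And>u. u \<in> C \<Longrightarrow> K + u \<bullet> \<theta>0 \<le> Om u"
proof -
  obtain u0 where u0: "u0 \<in> C" using Cne by blast
  obtain \<theta>0 where "\<forall>u\<in>C. val \<theta>0 u \<le> val \<theta>0 u0 + 1" using sep[OF u0, of 1] by auto
  then have "\<And>u. u \<in> C \<Longrightarrow> (- val \<theta>0 u0 - 1) + u \<bullet> \<theta>0 \<le> Om u" unfolding val_def by force
  then show ?thesis using that by blast
qed

lemma val_bdd: "\<exists>M. \<forall>v\<in>C. val \<theta> v \<le> M"
proof -
  obtain u0 where u0: "u0 \<in> C" using Cne by blast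
  obtain \<theta>0 where t0: "\<forall>u\<in>C. val \<theta>0 u \<le> val \<theta>0 u0 + 1" using sep[OF u0, of 1] by auto
  obtain c where c: "c > 0" "\<And>x. c * norm x \<le> N x" using cc by blast
  define D where "D = norm (\<theta> - \<theta>0)"
  define k where "k = c\<^sup>2 / (4 * \<beta>)"
  have k: "k > 0" unfolding k_def using c beta by simp
  define A where "A = 2 * (val \<theta>0 u0 + 1) - val \<theta> u0 + 2 * (u0 \<bullet> (\<theta> - \<theta>0))"
  have "val \<theta> v \<le> A + D\<^sup>2 / (4 * k)" if v: "v \<in> C" for v
  proof -
    define mid where "mid = (1/2) *\<^sub>R v + (1 - 1/2) *\<^sub>R u0"
    have midC: "mid \<in> C" unfolding mid_def using conv_mem[OF v u0, of "1/2"] by simp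
    have 1: "(1/2) * val \<theta> v + (1 - 1/2) * val \<theta> u0 + (1/2) * (1 - 1/2) / (2 * \<beta>) * (N (v - u0))\<^sup>2
           \<le> val \<theta> mid" unfolding mid_def by (rule val_mid[OF v u0]) auto
    have 2: "val \<theta> mid = val \<theta>0 mid + mid \<bullet> (\<theta> - \<theta>0)" unfolding val_def by (simp add: inner_diff_right)
    have 3: "val \<theta>0 mid \<le> val \<theta>0 u0 + 1" using t0 midC by auto
    have 4: "mid \<bullet> (\<theta> - \<theta>0) = (1/2) * (v \<bullet> (\<theta> - \<theta>0)) + (1/2) * (u0 \<bullet> (\<theta> - \<theta>0))"
      unfolding mid_def by (simp add: inner_add_left)
    have "val \<theta> v \<le> A + v \<bullet> (\<theta> - \<theta>0) - u0 \<bullet> (\<theta> - \<theta>0) - (N (v - u0))\<^sup>2 / (4 * \<beta>)"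
    proof -
      have "val \<theta> v \<le> 2 * val \<theta> mid - val \<theta> u0 - (N (v - u0))\<^sup>2 / (4 * \<beta>)"
        using 1 by simp
      moreover have "2 * val \<theta> mid \<le> 2*(val \<theta>0 u0 + 1) + v \<bullet> (\<theta> - \<theta>0) + u0 \<bullet> (\<theta> - \<theta>0)"
        using 2 3 4 by (simp add: algebra_simps)
      ultimately show ?thesis unfolding A_def by linarith
    qed
    moreover have "v \<bullet> (\<theta> - \<theta>0) - u0 \<bullet> (\<theta> - \<theta>0) \<le> D * norm (v - u0)"
      unfolding D_def using norm_cauchy_schwarz[of "v - u0" "\<theta> - \<theta>0"]
      by (simp add: inner_diff_left mult.commute)
    moreover have "k * (norm (v - u0))\<^sup>2 \<le> (N (v - u0))\<^sup>2 / (4 * \<beta>)"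
    proof -
      have "(c * norm (v - u0))\<^sup>2 \<le> (N (v - u0))\<^sup>2"
        using c(2)[of "v - u0"] c(1) by (intro power_mono) auto
      then show ?thesis unfolding k_def using beta by (simp add: field_simps power_mult_distrib)
    qed
    moreover have "D * norm (v - u0) - k * (norm (v - u0))\<^sup>2 \<le> D\<^sup>2 / (4 * k)" using quad_bound[OF k] by simp
    ultimately show ?thesis by linarith
  qed
  then show ?thesis by blast
qed

lemma near_opt:
  assumes "u \<in> C" "w \<in> C" "\<forall>v\<in>C. val \<theta> v \<le> S" "val \<theta> u \<ge> S - e" "val \<theta> w \<ge> S - e"
  shows "(N (u - w))\<^sup>2 \<le> 8 * \<beta> * e"
proof -
  have "(1/2) * val \<theta> u + (1 - 1/2) * val \<theta> w + (1/2) * (1 - 1/2) / (2 * \<beta>) * (N (u - w))\<^sup>2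
           \<le> val \<theta> ((1/2) *\<^sub>R u + (1 - 1/2) *\<^sub>R w)" by (rule val_mid[OF assms(1,2)]) auto
  also have "\<dots> \<le> S" using assms(3) conv_mem[OF assms(1,2), of "1/2"] by auto
  finally have "(1/2) * val \<theta> u + (1/2) * val \<theta> w + (N (u - w))\<^sup>2 / (8 * \<beta>) \<le> S"
    by simp
  then have "(N (u - w))\<^sup>2 / (8 * \<beta>) \<le> e" using assms(4,5) by linarith
  then show ?thesis using beta by (simp add: field_simps)
qed

lemma maximizer: "\<exists>u\<in>C. \<forall>v\<in>C. val \<theta> v \<le> val \<theta> u"
proof -
  obtain M where M: "\<forall>v\<in>C. val \<theta> v \<le> M" using val_bdd by blast
  have bdd: "bdd_above (val \<theta> ` C)" using M by (auto intro: bdd_aboveI2)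
  define S where "S = (SUP v\<in>C. val \<theta> v)"
  have le: "\<forall>v\<in>C. val \<theta> v \<le> S" unfolding S_def using cSUP_upper[OF _ bdd] by blast
  have "\<forall>n. \<exists>v\<in>C. S - inverse (real (Suc n)) < val \<theta> v"
  proof
    fix n
    have "S - inverse (real (Suc n)) < S" by simp
    then show "\<exists>v\<in>C. S - inverse (real (Suc n)) < val \<theta> v"
      unfolding S_def using less_cSUP_iff[OF Cne bdd] by blast
  qed
  then obtain v where v: "\<And>n. v n \<in> C" "\<And>n. S - inverse (real (Suc n)) < val \<theta> (v n)"
    by metis
  obtain c where c: "c > 0" "\<And>x. c * norm x \<le> N x" using cc by blast
  have "Cauchy v"
  proof (rule metric_CauchyI)
    fix e :: real assume e: "e > 0"
    obtain M0 :: nat where M0: "8 * \<beta> / (c * e)\<^sup>2 < real M0" using reals_Archimedean2 by blast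
    have "dist (v m) (v n) < e" if mn: "m \<ge> M0" "n \<ge> M0" for m n
    proof -
      have inv: "inverse (real (Suc k)) \<le> inverse (real (Suc M0))" if "k \<ge> M0" for k
        using that by (simp add: field_simps)
      have "(N (v m - v n))\<^sup>2 \<le> 8 * \<beta> * inverse (real (Suc M0))"
      proof (rule near_opt[OF v(1) v(1) le])
        show "S - inverse (real (Suc M0)) \<le> val \<theta> (v m)"
          using v(2)[of m] inv[OF mn(1)] by linarith
        show "S - inverse (real (Suc M0)) \<le> val \<theta> (v n)"
          using v(2)[of n] inv[OF mn(2)] by linarith
      qed
      also have "\<dots> < (c * e)\<^sup>2" by (rule inv_aux[OF _ M0]) (use c e in simp)
      finally have sq: "(N (v m - v n))\<^sup>2 < (c * e)\<^sup>2" .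
      have "0 \<le> c * e" using c e by simp
      with sq have "N (v m - v n) < c * e" by (rule power_less_imp_less_base)
      then have "c * norm (v m - v n) < c * e" using c(2)[of "v m - v n"] by simp
      then show ?thesis using c(1) by (simp add: dist_norm)
    qed
    then show "\<exists>M. \<forall>m\<ge>M. \<forall>n\<ge>M. dist (v m) (v n) < e" by blast
  qed
  then obtain u where u: "v \<longlonglongrightarrow> u" using Cauchy_convergent_iff convergent_def by blast
  have uC: "u \<in> C" using closed_sequentially[OF Ccl v(1) u] .
  have vS: "(\<lambda>n. val \<theta> (v n)) \<longlonglongrightarrow> S"
  proof (rule tendsto_sandwich[of "\<lambda>n. S - inverse (real (Suc n))" _ _ "\<lambda>n. S"])
    show "\<forall>\<^sub>F n in sequentially. S - inverse (real (Suc n)) \<le> val \<theta> (v n)"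
      by (intro always_eventually allI less_imp_le v(2))
    show "\<forall>\<^sub>F n in sequentially. val \<theta> (v n) \<le> S" using le v(1) by (intro always_eventually allI) blast
    show "(\<lambda>n. S - inverse (real (Suc n))) \<longlonglongrightarrow> S"
      using tendsto_diff[OF tendsto_const LIMSEQ_inverse_real_of_nat, of S] by simp
  qed simp
  have T: "(\<lambda>n. (v n, v n \<bullet> \<theta> - val \<theta> (v n))) \<longlonglongrightarrow> (u, u \<bullet> \<theta> - S)"
    by (intro tendsto_intros u vS)
  have M: "(v n, v n \<bullet> \<theta> - val \<theta> (v n)) \<in> Epi" for n
    unfolding Epi_def val_def using v(1) Psi_fin[OF v(1)] by simp
  have "(u, u \<bullet> \<theta> - S) \<in> Epi" using closed_sequentially[OF Epi_closed M T] .
  then have "Om u \<le> u \<bullet> \<theta> - S" unfolding Epi_def using Psi_fin[OF uC] by simp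
  then have "val \<theta> u \<ge> S" unfolding val_def by simp
  then show ?thesis using uC le by force
qed

end

lemma K_aux: "(c::real) > 0 \<Longrightarrow> \<beta> > 0 \<Longrightarrow> (x / c)\<^sup>2 / (4 * (1 / (2 * \<beta>))) = \<beta> / (2 * c\<^sup>2) * x\<^sup>2"
  by (simp add: field_simps power2_eq_square)
lemma ratio_aux: "(n::real) > 0 \<Longrightarrow> \<bar>R\<bar> \<le> K * n\<^sup>2 \<Longrightarrow> norm (norm R / n) \<le> K * n"
  by (simp add: divide_le_eq power2_eq_square mult.assoc mult.left_commute)
lemma cs_aux: "(c::real) > 0 \<Longrightarrow> a \<le> n1 * nh \<Longrightarrow> c * n1 \<le> M \<Longrightarrow> 0 \<le> nh \<Longrightarrow> a \<le> (nh / c) * M"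
proof -
  assume a: "c > 0" "a \<le> n1 * nh" "c * n1 \<le> M" "0 \<le> nh"
  have "c * (n1 * nh) \<le> M * nh" using mult_right_mono[OF a(3) a(4)] by (simp add: mult.assoc)
  then have "n1 * nh \<le> (nh / c) * M" using a(1) by (simp add: field_simps)
  then show ?thesis using a(2) by linarith
qed
lemma lin_aux: "(t::real) * A = (A - X) / 2 \<Longrightarrow> (1 - t) * A \<le> X \<Longrightarrow> X < A \<Longrightarrow> False"
  by (simp add: algebra_simps)

lemma half_aux: "(Q::real) > 0 \<Longrightarrow> ((Q - X) / (2 * Q)) * Q = (Q - X) / 2"
  by (simp add: field_simps)

context cvx begin

definition ustar where "ustar \<theta> = (SOME u. u \<in> C \<and> (\<forall>v\<in>C. val \<theta> v \<le> val \<theta> u))"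
definition Oc where "Oc \<theta> = val \<theta> (ustar \<theta>)"

lemma ustar: "ustar \<theta> \<in> C" "\<And>v. v \<in> C \<Longrightarrow> val \<theta> v \<le> Oc \<theta>"
proof -
  have "ustar \<theta> \<in> C \<and> (\<forall>v\<in>C. val \<theta> v \<le> val \<theta> (ustar \<theta>))"
    unfolding ustar_def by (rule someI_ex) (use maximizer in blast)
  then show "ustar \<theta> \<in> C" "\<And>v. v \<in> C \<Longrightarrow> val \<theta> v \<le> Oc \<theta>" unfolding Oc_def by auto
qed

lemma edom_Omega: "edom (Omega \<Psi> C) = C"
  unfolding edom_def Omega_def using Cdom unfolding edom_def by auto

lemma Omega_conj_eq: "Omega_conj \<Psi> C \<theta> = ereal (Oc \<theta>)"
proof -
  have eq: "ereal (u \<bullet> \<theta>) - Omega \<Psi> C u = ereal (val \<theta> u)" if "u \<in> C" for u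
    using Psi_fin[OF that] that unfolding Omega_def val_def by simp
  have "Omega_conj \<Psi> C \<theta> = (SUP u\<in>C. ereal (val \<theta> u))"
    unfolding Omega_conj_def edom_Omega using eq by (intro SUP_cong) auto
  also have "\<dots> = ereal (Oc \<theta>)"
  proof (rule antisym)
    show "(SUP u\<in>C. ereal (val \<theta> u)) \<le> ereal (Oc \<theta>)" using ustar(2) by (intro SUP_least) simp
    show "ereal (Oc \<theta>) \<le> (SUP u\<in>C. ereal (val \<theta> u))"
      unfolding Oc_def using ustar(1) by (rule SUP_upper)
  qed
  finally show ?thesis .
qed

lemma KI: assumes m: "m \<in> C" shows "val \<theta> m + (N (m - ustar \<theta>))\<^sup>2 / (2 * \<beta>) \<le> Oc \<theta>"
proof -
  let ?u = "ustar \<theta>" and ?Q = "(N (m - ustar \<theta>))\<^sup>2 / (2 * \<beta>)"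
  have main: "Oc \<theta> - val \<theta> m \<ge> (1 - t) * ?Q" if t: "0 < t" "t \<le> 1" for t
  proof -
    have "t * val \<theta> m + (1 - t) * val \<theta> ?u + t * (1 - t) / (2 * \<beta>) * (N (m - ?u))\<^sup>2
           \<le> val \<theta> (t *\<^sub>R m + (1 - t) *\<^sub>R ?u)" using val_mid[OF m ustar(1)] t by auto
    also have "\<dots> \<le> Oc \<theta>" using ustar(2) conv_mem[OF m ustar(1)] t by auto
    finally have "t * val \<theta> m + (1 - t) * Oc \<theta> + t * ((1 - t) * ?Q) \<le> Oc \<theta>"
      unfolding Oc_def by (simp add: algebra_simps)
    then have "t * ((1 - t) * ?Q) \<le> t * (Oc \<theta> - val \<theta> m)" by (simp add: algebra_simps)
    from mult_left_le_imp_le[OF this t(1)] show ?thesis .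
  qed
  have Q0: "?Q \<ge> 0" using beta by simp
  show ?thesis
  proof (rule ccontr)
    assume "\<not> ?thesis"
    then have lt: "Oc \<theta> - val \<theta> m < ?Q" by simp
    then have Qp: "?Q > 0" using main[of 1] by simp
    define t where "t = (?Q - (Oc \<theta> - val \<theta> m)) / (2 * ?Q)"
    have t0: "0 < t" unfolding t_def using lt Qp by (intro divide_pos_pos) auto
    have X0: "Oc \<theta> - val \<theta> m \<ge> 0" using ustar(2)[OF m] by simp
    have t1: "t \<le> 1" unfolding t_def by (subst divide_le_eq_1_pos) (use Qp X0 in auto)
    have "t * ?Q = (?Q - (Oc \<theta> - val \<theta> m)) / 2" unfolding t_def using Qp
      by (rule half_aux)
    moreover have "(1 - t) * ?Q = ?Q - t * ?Q" by (simp only: left_diff_distrib mult_1)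
    ultimately show False using main[OF t0 t1] lt lin_aux by metis
  qed
qed

lemma Oc_deriv: "(Oc has_derivative (\<lambda>h. ustar \<theta> \<bullet> h)) (at \<theta>)"
proof -
  obtain c where c: "c > 0" "\<And>x. c * norm x \<le> N x" using cc by blast
  let ?u = "ustar \<theta>"
  define K where "K = \<beta> / (2 * c\<^sup>2)"
  have bnd: "\<bar>Oc y - Oc \<theta> - ?u \<bullet> (y - \<theta>)\<bar> \<le> K * (norm (y - \<theta>))\<^sup>2" for y
  proof -
    define h where "h = y - \<theta>"
    have y: "y = \<theta> + h" unfolding h_def by simp
    have "val y ?u \<le> Oc y" by (rule ustar(2)[OF ustar(1)])
    then have lo: "Oc \<theta> + ?u \<bullet> h \<le> Oc y"
      unfolding Oc_def val_def y by (simp add: inner_add_right inner_add_left inner_commute)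
    let ?u' = "ustar y"
    have "Oc y = val \<theta> ?u' + ?u' \<bullet> h" unfolding Oc_def val_def y by (simp add: inner_add_right)
    also have "val \<theta> ?u' \<le> Oc \<theta> - (N (?u' - ?u))\<^sup>2 / (2 * \<beta>)" using KI[OF ustar(1)[of y], of \<theta>] by linarith
    also have "?u' \<bullet> h = ?u \<bullet> h + (?u' - ?u) \<bullet> h" by (simp add: inner_diff_left)
    finally have up0: "Oc y \<le> Oc \<theta> + ?u \<bullet> h + ((?u' - ?u) \<bullet> h - (N (?u' - ?u))\<^sup>2 / (2 * \<beta>))" by simp
    have "(?u' - ?u) \<bullet> h \<le> (norm h / c) * N (?u' - ?u)"
      by (rule cs_aux[OF c(1) norm_cauchy_schwarz c(2) norm_ge_zero])
    then have "(?u' - ?u) \<bullet> h - (N (?u' - ?u))\<^sup>2 / (2 * \<beta>) \<le> (norm h / c) * N (?u' - ?u) - (1 / (2*\<beta>)) * (N (?u' - ?u))\<^sup>2"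
      by simp
    also have "\<dots> \<le> (norm h / c)\<^sup>2 / (4 * (1 / (2*\<beta>)))" by (rule quad_bound) (use beta in simp)
    also have "\<dots> = K * (norm h)\<^sup>2" unfolding K_def using c(1) beta by (rule K_aux)
    finally have "Oc y \<le> Oc \<theta> + ?u \<bullet> h + K * (norm h)\<^sup>2" using up0 by simp
    then show ?thesis using lo unfolding h_def by simp
  qed
  show ?thesis unfolding has_derivative_iff_norm
  proof
    show "bounded_linear (\<lambda>h. ?u \<bullet> h)" by (rule bounded_linear_inner_right)
    show "((\<lambda>y. norm (Oc y - Oc \<theta> - ?u \<bullet> (y - \<theta>)) / norm (y - \<theta>)) \<longlongrightarrow> 0) (at \<theta>)"
    proof (rule Lim_null_comparison)
      show "\<forall>\<^sub>F y in at \<theta>. norm (norm (Oc y - Oc \<theta> - ?u \<bullet> (y - \<theta>)) / norm (y - \<theta>)) \<le> K * norm (y - \<theta>)"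
      proof (rule always_eventually, rule allI)
        fix y
        show "norm (norm (Oc y - Oc \<theta> - ?u \<bullet> (y - \<theta>)) / norm (y - \<theta>)) \<le> K * norm (y - \<theta>)"
        proof (cases "y = \<theta>")
          case True then show ?thesis by simp
        next
          case False
          then have "norm (y - \<theta>) > 0" by simp
          then show ?thesis using bnd[of y] by (rule ratio_aux)
        qed
      qed
      show "((\<lambda>y. K * norm (y - \<theta>)) \<longlongrightarrow> 0) (at \<theta>)"
        by (rule tendsto_mult_right_zero[OF tendsto_norm_zero[OF LIM_zero[OF tendsto_ident_at]]])
    qed
  qed
qed

end

context cvx begin
lemma proj_layer_eq: "proj_layer \<Psi> C \<theta> = ustar \<theta>"
proof -
  have f: "(\<lambda>\<eta>. real_of_ereal (Omega_conj \<Psi> C \<eta>)) = Oc" using Omega_conj_eq by simp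
  have ex: "\<exists>g. (Oc has_derivative (\<lambda>h. g \<bullet> h)) (at \<theta>)" using Oc_deriv by blast
  define g where "g = (SOME g. (Oc has_derivative (\<lambda>h. g \<bullet> h)) (at \<theta>))"
  have gd: "(Oc has_derivative (\<lambda>h. g \<bullet> h)) (at \<theta>)" unfolding g_def by (rule someI_ex[OF ex])
  have "(\<lambda>h. g \<bullet> h) = (\<lambda>h. ustar \<theta> \<bullet> h)" using has_derivative_unique[OF gd Oc_deriv] .
  then have "g \<bullet> (g - ustar \<theta>) = ustar \<theta> \<bullet> (g - ustar \<theta>)" by metis
  then have "(g - ustar \<theta>) \<bullet> (g - ustar \<theta>) = 0" by (simp add: inner_diff_left)
  then have "g = ustar \<theta>" by simp
  then show ?thesis unfolding proj_layer_def grad_def f g_def .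
qed

lemma Oc_cont: "continuous_on UNIV Oc"
  using Oc_deriv by (intro has_derivative_continuous_on) (auto intro: has_derivative_at_withinI)

lemma ustar_lip:
  assumes c: "c > 0" "\<And>x. c * norm x \<le> N x"
  shows "norm (ustar \<theta>1 - ustar \<theta>2) \<le> (\<beta> / (c\<^sup>2)) * norm (\<theta>1 - \<theta>2)"
proof -
  let ?u1 = "ustar \<theta>1" and ?u2 = "ustar \<theta>2"
  have 1: "val \<theta>1 ?u2 + (N (?u2 - ?u1))\<^sup>2 / (2 * \<beta>) \<le> val \<theta>1 ?u1" using KI[OF ustar(1)] unfolding Oc_def .
  have 2: "val \<theta>2 ?u1 + (N (?u1 - ?u2))\<^sup>2 / (2 * \<beta>) \<le> val \<theta>2 ?u2" using KI[OF ustar(1)] unfolding Oc_def .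
  have sym: "N (?u2 - ?u1) = N (?u1 - ?u2)" using isn_commute[OF isn] by simp
  have "(N (?u1 - ?u2))\<^sup>2 / \<beta> \<le> (?u1 - ?u2) \<bullet> (\<theta>1 - \<theta>2)"
    using 1 2 sym unfolding val_def by (simp add: inner_diff_left inner_diff_right algebra_simps)
  also have "\<dots> \<le> norm (?u1 - ?u2) * norm (\<theta>1 - \<theta>2)" using norm_cauchy_schwarz by blast
  finally have A: "(N (?u1 - ?u2))\<^sup>2 / \<beta> \<le> norm (?u1 - ?u2) * norm (\<theta>1 - \<theta>2)" .
  have "(c * norm (?u1 - ?u2))\<^sup>2 \<le> (N (?u1 - ?u2))\<^sup>2" using c by (intro power_mono) auto
  then have "c\<^sup>2 * (norm (?u1 - ?u2))\<^sup>2 / \<beta> \<le> norm (?u1 - ?u2) * norm (\<theta>1 - \<theta>2)"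
    using A beta by (smt (verit) divide_right_mono power_mult_distrib)
  then have B: "norm (?u1 - ?u2) * (c\<^sup>2 * norm (?u1 - ?u2)) \<le> norm (?u1 - ?u2) * (\<beta> * norm (\<theta>1 - \<theta>2))"
    using beta by (simp add: field_simps power2_eq_square)
  show ?thesis
  proof (cases "?u1 = ?u2")
    case True then show ?thesis using beta by simp
  next
    case False
    then have "c\<^sup>2 * norm (?u1 - ?u2) \<le> \<beta> * norm (\<theta>1 - \<theta>2)" using B by simp
    then show ?thesis using c by (simp add: field_simps)
  qed
qed

lemma ustar_cont: "continuous_on UNIV ustar"
proof -
  obtain c where c: "c > 0" "\<And>x. c * norm x \<le> N x" using cc by blast
  show ?thesis unfolding continuous_on_iff
  proof (intro ballI allI impI)
    fix x and e :: real assume e: "0 < e"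
    define d where "d = e * c\<^sup>2 / \<beta>"
    have d: "d > 0" unfolding d_def using e c beta by simp
    have "dist (ustar x') (ustar x) < e" if "dist x' x < d" for x'
    proof -
      have "dist (ustar x') (ustar x) \<le> (\<beta> / c\<^sup>2) * dist x' x" using ustar_lip[OF c] by (simp add: dist_norm)
      also have "\<dots> < (\<beta> / c\<^sup>2) * d" using that beta c by (intro mult_strict_left_mono) auto
      also have "\<dots> = e" unfolding d_def using beta c by simp
      finally show ?thesis .
    qed
    then show "\<exists>d>0. \<forall>x'\<in>UNIV. dist x' x < d \<longrightarrow> dist (ustar x') (ustar x) < e" using d by blast
  qed
qed

end

context cvx begin
definition OmC where "OmC u = (if u \<in> C then Om u else 0)"

lemma OmC_meas: "OmC \<in> borel_measurable borel"
proof (rule borel_measurable_iff_le[THEN iffD2], rule allI)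
  fix a :: real
  have cl: "closed {u \<in> C. \<Psi> u \<le> ereal a}"
  proof -
    have "{u \<in> C. \<Psi> u \<le> ereal a} = C \<inter> (\<lambda>u. (u, a)) -` {(u, t::real). \<Psi> u \<le> ereal t}" by auto
    moreover have "closed ((\<lambda>u. (u, a)) -` {(u, t::real). \<Psi> u \<le> ereal t})"
      by (rule continuous_closed_vimage[OF epi]) (intro continuous_intros)
    ultimately show ?thesis using Ccl by (simp add: closed_Int)
  qed
  have "{u. OmC u \<le> a} = {u \<in> C. \<Psi> u \<le> ereal a} \<union> (if 0 \<le> a then - C else {})"
    unfolding OmC_def using Psi_fin by auto
  moreover have "{u \<in> C. \<Psi> u \<le> ereal a} \<in> sets borel" using cl by (rule borel_closed)
  moreover have "(if 0 \<le> a then - C else {}) \<in> sets borel" using Ccl by (auto intro: borel_open)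
  ultimately show "{u \<in> space borel. OmC u \<le> a} \<in> sets borel" by simp
qed

end

locale decomp =
  fixes MX :: "'x measure" and \<rho> :: "('x \<times> 'y::finite) measure"
  assumes P: "prob_space \<rho>" and S: "sets \<rho> = sets (MX \<Otimes>\<^sub>M count_space UNIV)"
begin

definition mu where "mu = distr \<rho> MX fst"
definition nu where "nu y = distr (density \<rho> (indicator {z. snd z = y})) MX fst"
definition RN where "RN y = RN_deriv mu (nu y)"

lemma meas_rho: "measurable \<rho> M = measurable (MX \<Otimes>\<^sub>M count_space UNIV) M"
  by (rule measurable_cong_sets[OF S refl])

lemma space_rho: "space \<rho> = space (MX \<Otimes>\<^sub>M count_space UNIV)"
  by (rule sets_eq_imp_space_eq[OF S])

lemma fst_meas: "fst \<in> measurable \<rho> MX"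
  unfolding meas_rho by (rule measurable_fst)

lemma ind_meas: "(\<lambda>z. indicator {z. snd z = y} z :: ennreal) \<in> borel_measurable \<rho>"
  unfolding meas_rho by measurable

lemma mu_prob: "prob_space mu"
  unfolding mu_def by (rule prob_space.prob_space_distr[OF P fst_meas])

lemma sets_mu: "sets mu = sets MX" unfolding mu_def by simp
lemma sets_nu: "sets (nu y) = sets MX" unfolding nu_def by simp
lemma meas_mu: "measurable mu M = measurable MX M" by (rule measurable_cong_sets[OF sets_mu refl])
lemma space_mu: "space mu = space MX" unfolding mu_def by simp

lemma nu_int:
  assumes F: "F \<in> borel_measurable MX"
  shows "integral\<^sup>N (nu y) F = (\<integral>\<^sup>+z. indicator {z. snd z = y} z * F (fst z) \<partial>\<rho>)"
proof -
  have f1: "fst \<in> measurable (density \<rho> (indicator {z. snd z = y})) MX"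
    using fst_meas by (simp add: measurable_cong_sets[OF sets_density refl])
  have "integral\<^sup>N (nu y) F = (\<integral>\<^sup>+z. F (fst z) \<partial>density \<rho> (indicator {z. snd z = y}))"
    unfolding nu_def by (rule nn_integral_distr[OF f1]) (use F in simp)
  also have "\<dots> = (\<integral>\<^sup>+z. indicator {z. snd z = y} z * F (fst z) \<partial>\<rho>)"
    by (rule nn_integral_density[OF ind_meas]) (use measurable_comp[OF fst_meas F] in \<open>simp add: comp_def\<close>)
  finally show ?thesis .
qed

lemma abs_cont: "absolutely_continuous mu (nu y)"
  unfolding absolutely_continuous_def
proof
  fix A assume A: "A \<in> null_sets mu"
  then have As: "A \<in> sets MX" using sets_mu by (auto simp: null_sets_def)
  have pre: "fst -` A \<inter> space \<rho> \<in> sets \<rho>" using measurable_sets[OF fst_meas As] .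
  have "emeasure \<rho> (fst -` A \<inter> space \<rho>) = emeasure mu A"
    unfolding mu_def by (rule emeasure_distr[OF fst_meas As, symmetric])
  then have z: "emeasure \<rho> (fst -` A \<inter> space \<rho>) = 0" using A by auto
  have "emeasure (nu y) A = integral\<^sup>N (nu y) (indicator A)" using As sets_nu by simp
  also have "\<dots> = (\<integral>\<^sup>+z. indicator {z. snd z = y} z * indicator A (fst z) \<partial>\<rho>)"
    by (rule nu_int) (use As in simp)
  also have "\<dots> \<le> (\<integral>\<^sup>+z. indicator (fst -` A \<inter> space \<rho>) z \<partial>\<rho>)"
    by (intro nn_integral_mono) (auto simp: indicator_def)
  also have "\<dots> = 0" using z pre by simp
  finally have "emeasure (nu y) A = 0" by simp
  then show "A \<in> null_sets (nu y)" using As sets_nu by (auto simp: null_sets_def)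
qed

lemma DEC:
  assumes G: "G \<in> borel_measurable (MX \<Otimes>\<^sub>M count_space UNIV)"
  shows "(\<integral>\<^sup>+z. G z \<partial>\<rho>) = (\<integral>\<^sup>+x. (\<Sum>y\<in>UNIV. RN y x * G (x, y)) \<partial>mu)"
proof -
  interpret mu: prob_space mu by (rule mu_prob)
  have Gy: "(\<lambda>x. G (x, y)) \<in> borel_measurable MX" for y
    using G by measurable
  have "(\<integral>\<^sup>+z. G z \<partial>\<rho>) = (\<integral>\<^sup>+z. (\<Sum>y\<in>UNIV. indicator {z. snd z = y} z * G (fst z, y)) \<partial>\<rho>)"
  proof (rule nn_integral_cong)
    fix z :: "'x \<times> 'y"
    have "(\<Sum>y\<in>UNIV. indicator {z. snd z = y} z * G (fst z, y)) = (\<Sum>y\<in>UNIV. if snd z = y then G (fst z, y) else 0)"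
      by (intro sum.cong) (auto simp: indicator_def)
    also have "\<dots> = G (fst z, snd z)" by (simp add: sum.delta')
    finally show "G z = (\<Sum>y\<in>UNIV. indicator {z. snd z = y} z * G (fst z, y))" by simp
  qed
  also have "\<dots> = (\<Sum>y\<in>UNIV. \<integral>\<^sup>+z. indicator {z. snd z = y} z * G (fst z, y) \<partial>\<rho>)"
  proof (rule nn_integral_sum)
    fix y :: 'y
    have "(\<lambda>z. G (fst z, y)) \<in> borel_measurable \<rho>" using measurable_comp[OF fst_meas Gy[of y]] by (simp add: comp_def)
    then show "(\<lambda>z. indicator {z. snd z = y} z * G (fst z, y)) \<in> borel_measurable \<rho>"
      using ind_meas by measurable
  qed
  also have "\<dots> = (\<Sum>y\<in>UNIV. integral\<^sup>N (nu y) (\<lambda>x. G (x, y)))"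
    using nu_int[OF Gy] by simp
  also have "\<dots> = (\<Sum>y\<in>UNIV. \<integral>\<^sup>+x. RN y x * G (x, y) \<partial>mu)"
    unfolding RN_def using mu.RN_deriv_nn_integral[OF abs_cont] sets_nu sets_mu Gy meas_mu by simp
  also have "\<dots> = (\<integral>\<^sup>+x. (\<Sum>y\<in>UNIV. RN y x * G (x, y)) \<partial>mu)"
  proof (rule nn_integral_sum[symmetric])
    fix y
    have m1: "(\<lambda>x. G (x, y)) \<in> borel_measurable mu" unfolding meas_mu by (rule Gy)
    show "(\<lambda>x. RN y x * G (x, y)) \<in> borel_measurable mu"
      unfolding RN_def by (rule borel_measurable_times_ennreal[OF borel_measurable_RN_deriv m1])
  qed
  finally show ?thesis .
qed

end

context decomp begin

lemma RN_meas: "RN y \<in> borel_measurable MX"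
  unfolding RN_def using borel_measurable_RN_deriv[of mu "nu y"] unfolding meas_mu .

lemma sumRN: "AE x in mu. (\<Sum>y\<in>UNIV. RN y x) = 1"
proof -
  interpret mu: prob_space mu by (rule mu_prob)
  have m: "(\<lambda>x. \<Sum>y\<in>UNIV. RN y x) \<in> borel_measurable mu"
    unfolding meas_mu using RN_meas by (intro borel_measurable_sum) auto
  have "density mu (\<lambda>x. \<Sum>y\<in>UNIV. RN y x) = density mu (\<lambda>x. 1)"
  proof (rule measure_eqI)
    show "sets (density mu (\<lambda>x. \<Sum>y\<in>UNIV. RN y x)) = sets (density mu (\<lambda>x. 1))" by simp
    fix A assume "A \<in> sets (density mu (\<lambda>x. \<Sum>y\<in>UNIV. RN y x))"
    then have A: "A \<in> sets MX" using sets_mu by simp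
    have Gm: "(\<lambda>z. indicator A (fst z) :: ennreal) \<in> borel_measurable (MX \<Otimes>\<^sub>M count_space UNIV)"
      by (rule measurable_compose[OF measurable_fst borel_measurable_indicator[OF A]])
    have "emeasure (density mu (\<lambda>x. \<Sum>y\<in>UNIV. RN y x)) A = (\<integral>\<^sup>+x. (\<Sum>y\<in>UNIV. RN y x) * indicator A x \<partial>mu)"
      by (rule emeasure_density[OF m]) (use A sets_mu in simp)
    also have "\<dots> = (\<integral>\<^sup>+x. (\<Sum>y\<in>UNIV. RN y x * indicator A (fst (x, y))) \<partial>mu)"
      by (simp add: sum_distrib_right)
    also have "\<dots> = (\<integral>\<^sup>+z. indicator A (fst z) \<partial>\<rho>)"
      by (rule DEC[OF Gm, symmetric])
    also have "\<dots> = (\<integral>\<^sup>+z. indicator (fst -` A \<inter> space \<rho>) z \<partial>\<rho>)"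
      by (rule nn_integral_cong) (auto simp: indicator_def)
    also have "\<dots> = emeasure \<rho> (fst -` A \<inter> space \<rho>)"
      using measurable_sets[OF fst_meas A] by simp
    also have "\<dots> = emeasure mu A"
      unfolding mu_def by (rule emeasure_distr[OF fst_meas A, symmetric])
    also have "\<dots> = emeasure (density mu (\<lambda>x. 1)) A" by (simp add: density_1)
    finally show "emeasure (density mu (\<lambda>x. \<Sum>y\<in>UNIV. RN y x)) A = emeasure (density mu (\<lambda>x. 1)) A" .
  qed
  then show ?thesis using mu.density_unique_iff[OF m, of "\<lambda>x. 1"] by simp
qed

definition good where "good x \<longleftrightarrow> (\<Sum>y\<in>UNIV. RN y x) = 1"
definition eta where "eta y x = (if good x then enn2real (RN y x) else 1 / real CARD('y))"

lemma good_RN: assumes "good x" shows "RN y x < top" "RN y x \<le> 1"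
proof -
  have "RN y x \<le> (\<Sum>y\<in>UNIV. RN y x)" by (rule member_le_sum) auto
  then show "RN y x \<le> 1" using assms unfolding good_def by simp
  then show "RN y x < top" by (simp add: order_le_less_trans)
qed

lemma eta_nonneg: "0 \<le> eta y x" unfolding eta_def by simp

lemma eta_sum: "(\<Sum>y\<in>UNIV. eta y x) = 1"
proof (cases "good x")
  case True
  have "(\<Sum>y\<in>UNIV. eta y x) = (\<Sum>y\<in>UNIV. enn2real (RN y x))" unfolding eta_def using True by simp
  also have "\<dots> = enn2real (\<Sum>y\<in>UNIV. RN y x)" using enn2real_sum[of UNIV "\<lambda>y. RN y x"] good_RN[OF True]
    by (simp add: comp_def)
  also have "\<dots> = 1" using True unfolding good_def by simp
  finally show ?thesis .
next
  case False
  then show ?thesis unfolding eta_def by simp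
qed

lemma eta_le1: "eta y x \<le> 1"
proof -
  have "eta y x \<le> (\<Sum>y\<in>UNIV. eta y x)" by (rule member_le_sum) (auto simp: eta_nonneg)
  then show ?thesis using eta_sum by simp
qed

lemma eta_meas: "(\<lambda>x. eta y x) \<in> borel_measurable MX"
proof -
  have g: "{x \<in> space MX. good x} \<in> sets MX"
    unfolding good_def using RN_meas by measurable
  show ?thesis unfolding eta_def
    by (rule measurable_If) (use RN_meas g in auto)
qed

lemma AE_eta: "AE x in mu. \<forall>y. ennreal (eta y x) = RN y x"
  using sumRN
proof (rule AE_mp, intro AE_I2 impI allI)
  fix x y assume "(\<Sum>y\<in>UNIV. RN y x) = 1"
  then have "good x" unfolding good_def .
  then show "ennreal (eta y x) = RN y x" unfolding eta_def using good_RN by simp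
qed

lemma DEC2:
  assumes G: "G \<in> borel_measurable (MX \<Otimes>\<^sub>M count_space UNIV)"
  shows "(\<integral>\<^sup>+z. G z \<partial>\<rho>) = (\<integral>\<^sup>+x. (\<Sum>y\<in>UNIV. ennreal (eta y x) * G (x, y)) \<partial>mu)"
  unfolding DEC[OF G] using AE_eta by (intro nn_integral_cong_AE) auto

lemma INT:
  fixes H :: "'x \<times> 'y \<Rightarrow> real"
  assumes Hm: "H \<in> borel_measurable (MX \<Otimes>\<^sub>M count_space UNIV)"
    and H0: "\<And>z. 0 \<le> H z" and HB: "\<And>z. H z \<le> B"
  shows "integral\<^sup>L \<rho> H = (\<integral>x. (\<Sum>y\<in>UNIV. eta y x * H (x, y)) \<partial>mu)"
proof -
  interpret rho: prob_space \<rho> by (rule P)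
  interpret mu: prob_space mu by (rule mu_prob)
  have Hm': "H \<in> borel_measurable \<rho>" unfolding meas_rho by (rule Hm)
  have i1: "integrable \<rho> H" by (rule rho.integrable_const_bound[where B=B]) (use H0 HB Hm' in auto)
  have Hy: "(\<lambda>x. H (x, y)) \<in> borel_measurable MX" for y using Hm by measurable
  have m2: "(\<lambda>x. \<Sum>y\<in>UNIV. eta y x * H (x, y)) \<in> borel_measurable mu"
    unfolding meas_mu using Hy eta_meas by (intro borel_measurable_sum borel_measurable_times) auto
  have b2: "norm (\<Sum>y\<in>UNIV. eta y x * H (x, y)) \<le> B" for x
  proof -
    have "(\<Sum>y\<in>UNIV. eta y x * H (x, y)) \<le> (\<Sum>y\<in>UNIV. eta y x * B)"
      by (intro sum_mono mult_left_mono HB eta_nonneg)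
    also have "\<dots> = B" using eta_sum by (simp add: sum_distrib_right[symmetric])
    finally show ?thesis using H0 eta_nonneg by (simp add: sum_nonneg)
  qed
  have i2: "integrable mu (\<lambda>x. \<Sum>y\<in>UNIV. eta y x * H (x, y))"
    by (rule mu.integrable_const_bound[where B=B]) (use b2 m2 in auto)
  have "ennreal (integral\<^sup>L \<rho> H) = (\<integral>\<^sup>+z. ennreal (H z) \<partial>\<rho>)"
    by (rule nn_integral_eq_integral[OF i1, symmetric]) (use H0 in auto)
  also have "\<dots> = (\<integral>\<^sup>+x. (\<Sum>y\<in>UNIV. ennreal (eta y x) * ennreal (H (x, y))) \<partial>mu)"
    by (rule DEC2) (use Hm in measurable)
  also have "\<dots> = (\<integral>\<^sup>+x. ennreal (\<Sum>y\<in>UNIV. eta y x * H (x, y)) \<partial>mu)"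
    using H0 eta_nonneg by (intro nn_integral_cong) (simp add: ennreal_mult[symmetric] mult_nonneg_nonneg)
  also have "\<dots> = ennreal (\<integral>x. (\<Sum>y\<in>UNIV. eta y x * H (x, y)) \<partial>mu)"
    by (rule nn_integral_eq_integral[OF i2]) (use H0 eta_nonneg in \<open>auto intro!: sum_nonneg\<close>)
  finally show ?thesis
    using H0 eta_nonneg by (subst (asm) ennreal_inj) (auto intro!: integral_nonneg_AE sum_nonneg)
qed

end

lemma decode_ex: "\<exists>y::'y::{finite,linorder}. \<forall>y'. (f y :: real) \<le> f y'"
proof -
  let ?M = "Min (range f)"
  have "?M \<in> range f" by (rule Min_in) auto
  then obtain y where "f y = ?M" by (metis imageE)
  moreover have "?M \<le> f y'" for y' by (rule Min_le) auto
  ultimately show ?thesis by metis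
qed

lemma Least_fin:
  fixes P :: "'y::{finite,linorder} \<Rightarrow> bool"
  assumes "\<exists>y. P y"
  shows "P (Least P) \<and> (\<forall>y. P y \<longrightarrow> Least P \<le> y)"
proof -
  have fin: "finite {a. P a}" by simp
  have ne: "{a. P a} \<noteq> {}" using assms by auto
  have L: "Least P = Min {a. P a}" using Least_Min[OF fin assms] by simp
  show ?thesis unfolding L using Min_in[OF fin ne] Min_le[OF fin] by auto
qed

lemma decode_min:
  fixes \<phi> :: "'y::{finite,linorder} \<Rightarrow> real^'p"
  shows "\<phi> (decode \<phi> V b u) \<bullet> (V *v u + b) \<le> \<phi> y' \<bullet> (V *v u + b)"
proof -
  have ex: "\<exists>y. \<forall>y'. \<phi> y \<bullet> (V *v u + b) \<le> \<phi> y' \<bullet> (V *v u + b)"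
    by (rule decode_ex)
  have "\<forall>y'. \<phi> (decode \<phi> V b u) \<bullet> (V *v u + b) \<le> \<phi> y' \<bullet> (V *v u + b)"
    unfolding decode_def using Least_fin[OF ex] by blast
  then show ?thesis by blast
qed

lemma decode_eq_iff:
  fixes \<phi> :: "'y::{finite,linorder} \<Rightarrow> real^'p"
  shows "decode \<phi> V b u = y \<longleftrightarrow>
    (\<forall>y''. \<phi> y \<bullet> (V *v u + b) \<le> \<phi> y'' \<bullet> (V *v u + b)) \<and>
    (\<forall>y'. (\<forall>y''. \<phi> y' \<bullet> (V *v u + b) \<le> \<phi> y'' \<bullet> (V *v u + b)) \<longrightarrow> y \<le> y')"
  (is "?l \<longleftrightarrow> ?P y \<and> (\<forall>y'. ?P y' \<longrightarrow> y \<le> y')")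
proof
  assume l: ?l
  show "?P y \<and> (\<forall>y'. ?P y' \<longrightarrow> y \<le> y')"
  proof
    show "?P y" using decode_min[of \<phi> V b u] l by blast
    have ex: "\<exists>y. ?P y" by (rule decode_ex)
    show "\<forall>y'. ?P y' \<longrightarrow> y \<le> y'" using l Least_fin[OF ex] unfolding decode_def by blast
  qed
next
  assume r: "?P y \<and> (\<forall>y'. ?P y' \<longrightarrow> y \<le> y')"
  show ?l unfolding decode_def by (rule Least_equality) (use r in auto)
qed

lemma decode_meas:
  fixes \<phi> :: "'y::{finite,linorder} \<Rightarrow> real^'p"
  shows "decode \<phi> V b \<in> borel \<rightarrow>\<^sub>M count_space UNIV"
proof (rule measurable_count_space_eq2_countable[THEN iffD2], intro conjI ballI)
  show "decode \<phi> V b \<in> space borel \<rightarrow> UNIV" by simp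
  fix y :: 'y
  define F where "F y u = \<phi> y \<bullet> (V *v u + b)" for y u
  have Fm[measurable]: "F y \<in> borel_measurable borel" for y
    unfolding F_def by (intro borel_measurable_continuous_onI continuous_intros)
  have "decode \<phi> V b -` {y} = {u. (\<forall>y''. \<phi> y \<bullet> (V *v u + b) \<le> \<phi> y'' \<bullet> (V *v u + b)) \<and>
    (\<forall>y'. (\<forall>y''. \<phi> y' \<bullet> (V *v u + b) \<le> \<phi> y'' \<bullet> (V *v u + b)) \<longrightarrow> y \<le> y')}"
    using decode_eq_iff[of \<phi> V b] by blast
  also have "\<dots> = {u. (\<forall>y''. F y u \<le> F y'' u) \<and> (\<forall>y'. (\<forall>y''. F y' u \<le> F y'' u) \<longrightarrow> y \<le> y')}"
    unfolding F_def ..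
  also have "\<dots> \<in> sets borel" by measurable
  finally show "decode \<phi> V b -` {y} \<inter> space borel \<in> sets borel" by simp
qed

lemma sq_int:
  fixes f :: "'a \<Rightarrow> real"
  assumes M: "prob_space M" and i1: "integrable M f" and i2: "integrable M (\<lambda>x. (f x)\<^sup>2)"
  shows "(integral\<^sup>L M f)\<^sup>2 \<le> (\<integral>x. (f x)\<^sup>2 \<partial>M)"
proof -
  interpret prob_space M by (rule M)
  define E where "E = integral\<^sup>L M f"
  have "0 \<le> (\<integral>x. (f x - E)\<^sup>2 \<partial>M)" by (rule integral_nonneg_AE) simp
  also have "(\<lambda>x. (f x - E)\<^sup>2) = (\<lambda>x. (f x)\<^sup>2 - 2 * E * f x + E\<^sup>2)" by (simp add: power2_eq_square algebra_simps)
  also have "(\<integral>x. (f x)\<^sup>2 - 2 * E * f x + E\<^sup>2 \<partial>M) = (\<integral>x. (f x)\<^sup>2 \<partial>M) - 2 * E * E + E\<^sup>2"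
    using i1 i2 prob_space by (simp add: E_def)
  finally show ?thesis unfolding E_def by (simp add: power2_eq_square)
qed

lemma final_aux:
  fixes l s n a \<beta> :: real
  assumes l0: "0 \<le> l" and ln: "l \<le> 2 * s * n" and s: "s > 0" and b: "\<beta> > 0"
    and na: "n\<^sup>2 / (2 * \<beta>) \<le> a"
  shows "l\<^sup>2 / (8 * \<beta> * s\<^sup>2) \<le> a"
proof -
  have "l\<^sup>2 \<le> (2 * s * n)\<^sup>2" using l0 ln by (intro power_mono) auto
  then have "l\<^sup>2 / (8 * \<beta> * s\<^sup>2) \<le> (2 * s * n)\<^sup>2 / (8 * \<beta> * s\<^sup>2)" using s b by (intro divide_right_mono) auto
  also have "\<dots> = n\<^sup>2 / (2 * \<beta>)" using s b by (simp add: field_simps power2_eq_square)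
  finally show ?thesis using na by simp
qed

theorem proposition5:
  fixes MX :: "'x measure"
    and \<rho> :: "('x \<times> 'y::{finite,linorder}) measure"
    and \<phi> :: "'y \<Rightarrow> real ^ 'p"
    and L :: "'y \<Rightarrow> 'y \<Rightarrow> real"
    and V :: "real ^ 'p ^ 'p" and b :: "real ^ 'p" and c :: "'y \<Rightarrow> real"
    and \<Psi> :: "real ^ 'p \<Rightarrow> ereal"
    and N :: "real ^ 'p \<Rightarrow> real"
    and C :: "(real ^ 'p) set"
    and \<beta> :: real
    and g :: "'x \<Rightarrow> real ^ 'p"
  assumes rho: "prob_space \<rho>" "sets \<rho> = sets (MX \<Otimes>\<^sub>M count_space UNIV)"
    and L_nonneg: "\<And>y' y. 0 \<le> L y' y"
    and L_affine: "\<And>y' y. L y' y = \<phi> y' \<bullet> (V *v \<phi> y + b) + c y"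
    and legendre: "legendre_type \<Psi>"
    and norm: "is_norm N"
    and beta: "\<beta> > 0"
    and strong: "strongly_convex_over \<beta> N C \<Psi>"
    and C: "closed C" "convex C" "range \<phi> \<subseteq> C" "C \<subseteq> edom \<Psi>"
    and sigma: "(SUP y. dual_norm N (transpose V *v \<phi> y)) > 0"
    and g: "g \<in> borel_measurable MX"
  shows "ennreal ((excess_target_risk MX \<rho> L (decode \<phi> V b \<circ> proj_layer \<Psi> C \<circ> g))\<^sup>2
            / (8 * \<beta> * (SUP y. dual_norm N (transpose V *v \<phi> y))\<^sup>2))
         \<le> excess_surrogate_risk MX \<rho> \<Psi> C \<phi> g"
proof -
  have pcc: "proper_closed_convex \<Psi>" using legendre unfolding legendre_type_def by auto
  have notminf: "\<And>u. \<Psi> u \<noteq> -\<infinity>" and epi: "closed {(u, t::real). \<Psi> u \<le> ereal t}"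
    using pcc unfolding proper_closed_convex_def by auto
  have Cne: "C \<noteq> {}" using C(3) by auto
  interpret cv: cvx \<Psi> N C \<beta>
    by unfold_locales (use norm beta strong C Cne notminf epi in auto)
  interpret dc: decomp MX \<rho> by (rule decomp.intro[OF rho])
  interpret mu: prob_space dc.mu by (rule dc.mu_prob)
  define \<sigma> where "\<sigma> = (SUP y. dual_norm N (transpose V *v \<phi> y))"
  have sig: "\<sigma> > 0" using sigma unfolding \<sigma>_def .
  have sig_ge: "dual_norm N (transpose V *v \<phi> y) \<le> \<sigma>" for y
    unfolding \<sigma>_def by (rule cSUP_upper) (auto intro: bdd_above_finite)
  have phiC: "\<phi> y \<in> C" for y using C(3) by auto

  define m where "m x = (\<Sum>y\<in>UNIV. dc.eta y x *\<^sub>R \<phi> y)" for x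
  have mC: "m x \<in> C" for x
    unfolding m_def by (rule convex_sum) (auto simp: C(2) dc.eta_sum dc.eta_nonneg phiC)
  have mmeas[measurable]: "m \<in> borel_measurable MX"
    unfolding m_def by (intro borel_measurable_sum borel_measurable_scaleR dc.eta_meas) auto
  have OmC_m: "cv.OmC (m x) = cv.Om (m x)" for x using mC unfolding cv.OmC_def by simp
  have OmC_phi: "cv.OmC (\<phi> y) = cv.Om (\<phi> y)" for y using phiC unfolding cv.OmC_def by simp
  have Ocm[measurable]: "cv.Oc \<in> borel_measurable borel" by (rule borel_measurable_continuous_onI[OF cv.Oc_cont])
  have Um[measurable]: "cv.ustar \<in> borel_measurable borel" by (rule borel_measurable_continuous_onI[OF cv.ustar_cont])
  have OmCm[measurable]: "cv.OmC \<in> borel_measurable borel" by (rule cv.OmC_meas)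
  have dm[measurable]: "decode \<phi> V b \<in> borel \<rightarrow>\<^sub>M count_space UNIV" by (rule decode_meas)
  have phim[measurable]: "\<phi> \<in> count_space UNIV \<rightarrow>\<^sub>M borel" by simp

  define T where "T x y' = \<phi> y' \<bullet> (V *v m x + b)" for x y'
  define cb where "cb x = (\<Sum>y\<in>UNIV. dc.eta y x * c y)" for x
  have r_eq: "(\<Sum>y\<in>UNIV. dc.eta y x * L y' y) = T x y' + cb x" for x y'
  proof -
    have "(\<Sum>y\<in>UNIV. dc.eta y x * L y' y)
       = (\<Sum>y\<in>UNIV. dc.eta y x * (\<phi> y' \<bullet> (V *v \<phi> y))) + (\<Sum>y\<in>UNIV. dc.eta y x) * (\<phi> y' \<bullet> b) + cb x"
      unfolding L_affine cb_def by (simp add: algebra_simps inner_add_right sum.distrib sum_distrib_right sum_distrib_left)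
    also have "(\<Sum>y\<in>UNIV. dc.eta y x * (\<phi> y' \<bullet> (V *v \<phi> y))) = \<phi> y' \<bullet> (V *v m x)"
      unfolding m_def by (simp add: vec.sum matrix_vector_mult_scaleR inner_sum_right)
    finally show ?thesis unfolding T_def using dc.eta_sum by (simp add: inner_add_right)
  qed
  define Lmax where "Lmax = (\<Sum>y'\<in>UNIV. \<Sum>y\<in>UNIV. L y' y)"
  have Lle: "L y' y \<le> Lmax" for y' y
  proof -
    have "L y' y \<le> (\<Sum>y\<in>UNIV. L y' y)" by (rule member_le_sum) (auto simp: L_nonneg)
    also have "\<dots> \<le> Lmax" unfolding Lmax_def by (rule member_le_sum) (auto simp: L_nonneg sum_nonneg)
    finally show ?thesis .
  qed
  have r_bnd: "0 \<le> T x y' + cb x \<and> T x y' + cb x \<le> Lmax" for x y'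
  proof -
    have "(\<Sum>y\<in>UNIV. dc.eta y x * L y' y) \<le> (\<Sum>y\<in>UNIV. dc.eta y x * Lmax)"
      by (intro sum_mono mult_left_mono Lle dc.eta_nonneg)
    also have "\<dots> = Lmax" using dc.eta_sum by (simp add: sum_distrib_right[symmetric])
    moreover have "0 \<le> (\<Sum>y\<in>UNIV. dc.eta y x * L y' y)"
      using dc.eta_nonneg L_nonneg by (intro sum_nonneg mult_nonneg_nonneg) auto
    ultimately show ?thesis using r_eq[of x y'] by simp
  qed
  have rmeas: "(\<lambda>x. T x (f' x) + cb x) \<in> borel_measurable MX" if f'[measurable]: "f' \<in> MX \<rightarrow>\<^sub>M count_space UNIV" for f'
  proof -
    have "(\<lambda>x. \<Sum>y\<in>UNIV. dc.eta y x * L (f' x) y) \<in> borel_measurable MX"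
      using dc.eta_meas by measurable
    then show ?thesis using r_eq by simp
  qed
  have rint: "integrable dc.mu (\<lambda>x. T x (f' x) + cb x)" if f': "f' \<in> MX \<rightarrow>\<^sub>M count_space UNIV" for f'
  proof (rule mu.integrable_const_bound[where B=Lmax])
    show "AE x in dc.mu. norm (T x (f' x) + cb x) \<le> Lmax" using r_bnd by (intro AE_I2) simp
    show "(\<lambda>x. T x (f' x) + cb x) \<in> borel_measurable dc.mu" unfolding dc.meas_mu by (rule rmeas[OF f'])
  qed
  have tr: "target_risk \<rho> L f' = (\<integral>x. T x (f' x) + cb x \<partial>dc.mu)" if f'[measurable]: "f' \<in> MX \<rightarrow>\<^sub>M count_space UNIV" for f'
  proof -
    have "target_risk \<rho> L f' = (\<integral>x. (\<Sum>y\<in>UNIV. dc.eta y x * L (f' (fst (x, y))) (snd (x, y))) \<partial>dc.mu)"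
      unfolding target_risk_def by (rule dc.INT[where B=Lmax]) (auto simp: L_nonneg Lle)
    then show ?thesis using r_eq by simp
  qed
  have tr0: "0 \<le> target_risk \<rho> L f'" for f'
    unfolding target_risk_def by (rule integral_nonneg_AE) (simp add: L_nonneg)

  define fs where "fs x = decode \<phi> V b (m x)" for x
  have fsm[measurable]: "fs \<in> MX \<rightarrow>\<^sub>M count_space UNIV" unfolding fs_def by measurable
  define u where "u x = cv.ustar (g x)" for x
  define f0 where "f0 = decode \<phi> V b \<circ> proj_layer \<Psi> C \<circ> g"
  have f0_eq: "f0 x = decode \<phi> V b (u x)" for x unfolding f0_def u_def by (simp add: cv.proj_layer_eq)
  have f0m[measurable]: "f0 \<in> MX \<rightarrow>\<^sub>M count_space UNIV"
  proof -
    have "(\<lambda>x. decode \<phi> V b (cv.ustar (g x))) \<in> MX \<rightarrow>\<^sub>M count_space UNIV" using g by measurable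
    then show ?thesis using f0_eq unfolding u_def by (simp add: fun_eq_iff[symmetric] comp_def f0_def cv.proj_layer_eq)
  qed
  have opt: "T x (fs x) \<le> T x y'" for x y' unfolding T_def fs_def by (rule decode_min)
  define l where "l x = T x (f0 x) - T x (fs x)" for x
  have l0: "0 \<le> l x" for x using opt[of x "f0 x"] unfolding l_def by simp
  have lB: "l x \<le> Lmax" for x using r_bnd[of x "f0 x"] r_bnd[of x "fs x"] unfolding l_def by simp
  have lN: "l x \<le> 2 * \<sigma> * N (u x - m x)" for x
  proof -
    let ?yh = "f0 x" and ?ys = "fs x" and ?d = "m x - u x"
    have dec: "\<phi> ?yh \<bullet> (V *v u x + b) \<le> \<phi> ?ys \<bullet> (V *v u x + b)" unfolding f0_eq by (rule decode_min)
    have e1: "\<phi> ?yh \<bullet> (V *v ?d) = (transpose V *v \<phi> ?yh) \<bullet> ?d" by (simp add: dot_lmul_matrix)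
    have e2: "- (\<phi> ?ys \<bullet> (V *v ?d)) = (transpose V *v \<phi> ?ys) \<bullet> (- ?d)"
      by (simp add: dot_lmul_matrix vec.diff inner_diff_right)
    have "l x = (\<phi> ?yh \<bullet> (V *v u x + b) - \<phi> ?ys \<bullet> (V *v u x + b)) + \<phi> ?yh \<bullet> (V *v ?d) - \<phi> ?ys \<bullet> (V *v ?d)"
      unfolding l_def T_def by (simp add: matrix_vector_right_distrib inner_add_right inner_diff_right algebra_simps)
    also have "\<dots> \<le> 0 + dual_norm N (transpose V *v \<phi> ?yh) * N ?d + dual_norm N (transpose V *v \<phi> ?ys) * N (- ?d)"
      using dec dual_le[OF norm, of "transpose V *v \<phi> ?yh" ?d] dual_le[OF norm, of "transpose V *v \<phi> ?ys" "- ?d"] e1 e2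
      by linarith
    also have "\<dots> \<le> 0 + \<sigma> * N ?d + \<sigma> * N ?d"
    proof -
      have a1: "dual_norm N (transpose V *v \<phi> ?yh) * N ?d \<le> \<sigma> * N ?d"
        by (rule mult_right_mono[OF sig_ge isn_nonneg[OF norm]])
      have "dual_norm N (transpose V *v \<phi> ?ys) * N (- ?d) \<le> \<sigma> * N (- ?d)"
        by (rule mult_right_mono[OF sig_ge isn_nonneg[OF norm]])
      then have a2: "dual_norm N (transpose V *v \<phi> ?ys) * N (- ?d) \<le> \<sigma> * N ?d"
        by (simp only: isn_minus[OF norm])
      show ?thesis using a1 a2 by linarith
    qed
    also have "N ?d = N (u x - m x)" using isn_commute[OF norm] by simp
    finally show ?thesis by simp
  qed

  have lm: "l \<in> borel_measurable MX"
  proof -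
    have "l = (\<lambda>x. (T x (f0 x) + cb x) - (T x (fs x) + cb x))" unfolding l_def by (simp add: fun_eq_iff)
    then show ?thesis using borel_measurable_diff[OF rmeas[OF f0m] rmeas[OF fsm]] by simp
  qed
  have li: "integrable dc.mu l"
  proof (rule mu.integrable_const_bound[where B=Lmax])
    show "AE x in dc.mu. norm (l x) \<le> Lmax" using l0 lB by (intro AE_I2) simp
    show "l \<in> borel_measurable dc.mu" unfolding dc.meas_mu by (rule lm)
  qed
  have l2m: "(\<lambda>x. (l x)\<^sup>2) \<in> borel_measurable MX" using lm by measurable
  have l2i: "integrable dc.mu (\<lambda>x. (l x)\<^sup>2)"
  proof (rule mu.integrable_const_bound[where B="Lmax\<^sup>2"])
    show "AE x in dc.mu. norm ((l x)\<^sup>2) \<le> Lmax\<^sup>2"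
    proof (intro AE_I2)
      fix x
      have "(l x)\<^sup>2 \<le> Lmax\<^sup>2" by (rule power_mono[OF lB l0])
      then show "norm ((l x)\<^sup>2) \<le> Lmax\<^sup>2" by simp
    qed
    show "(\<lambda>x. (l x)\<^sup>2) \<in> borel_measurable dc.mu" unfolding dc.meas_mu by (rule l2m)
  qed

  define INFL where "INFL = (INF f'\<in>measurable MX (count_space UNIV). target_risk \<rho> L f')"
  have INFL_ge: "target_risk \<rho> L fs \<le> INFL"
    unfolding INFL_def
  proof (rule cINF_greatest)
    show "measurable MX (count_space (UNIV::'y set)) \<noteq> {}"
    proof
      assume e: "measurable MX (count_space (UNIV::'y set)) = {}"
      show False using fsm unfolding e by (rule emptyE)
    qed
    fix f' :: "'x \<Rightarrow> 'y" assume f': "f' \<in> measurable MX (count_space UNIV)"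
    show "target_risk \<rho> L fs \<le> target_risk \<rho> L f'"
      unfolding tr[OF fsm] tr[OF f'] by (rule integral_mono[OF rint[OF fsm] rint[OF f']]) (simp add: opt)
  qed
  have INFL_le: "INFL \<le> target_risk \<rho> L f0"
    unfolding INFL_def by (rule cINF_lower[OF bdd_belowI2[where m=0] f0m]) (rule tr0)
  have dL_eq: "excess_target_risk MX \<rho> L f0 = target_risk \<rho> L f0 - INFL"
    unfolding excess_target_risk_def INFL_def ..
  have dL0: "0 \<le> excess_target_risk MX \<rho> L f0" using INFL_le dL_eq by simp
  have dLl: "excess_target_risk MX \<rho> L f0 \<le> integral\<^sup>L dc.mu l"
  proof -
    have "target_risk \<rho> L f0 - target_risk \<rho> L fs = integral\<^sup>L dc.mu l"
    proof -
      have "(\<integral>x. T x (f0 x) + cb x \<partial>dc.mu) - (\<integral>x. T x (fs x) + cb x \<partial>dc.mu)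
          = (\<integral>x. (T x (f0 x) + cb x) - (T x (fs x) + cb x) \<partial>dc.mu)"
        by (rule Bochner_Integration.integral_diff[symmetric, OF rint[OF f0m] rint[OF fsm]])
      also have "\<dots> = integral\<^sup>L dc.mu l" unfolding l_def by simp
      finally show ?thesis unfolding tr[OF f0m] tr[OF fsm] .
    qed
    then show ?thesis using dL_eq INFL_ge by simp
  qed
  have sq: "(excess_target_risk MX \<rho> L f0)\<^sup>2 \<le> (\<integral>x. (l x)\<^sup>2 \<partial>dc.mu)"
  proof -
    have "(excess_target_risk MX \<rho> L f0)\<^sup>2 \<le> (integral\<^sup>L dc.mu l)\<^sup>2"
      using dL0 dLl by (intro power_mono) auto
    also have "\<dots> \<le> (\<integral>x. (l x)\<^sup>2 \<partial>dc.mu)" by (rule sq_int[OF dc.mu_prob li l2i])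
    finally show ?thesis .
  qed

  define A where "A \<theta> x = cv.Oc \<theta> + cv.OmC (m x) - \<theta> \<bullet> m x" for \<theta> x
  have A_val: "A \<theta> x = cv.Oc \<theta> - cv.val \<theta> (m x)" for \<theta> x
    unfolding A_def cv.val_def OmC_m by (simp add: inner_commute)
  have A0: "0 \<le> A \<theta> x" for \<theta> x using cv.ustar(2)[OF mC] A_val by simp
  have KIA: "(N (u x - m x))\<^sup>2 / (2 * \<beta>) \<le> A (g x) x" for x
    using cv.KI[OF mC, of "g x" x] A_val isn_commute[OF norm, of "m x" "u x"] unfolding u_def by simp
  have la: "(l x)\<^sup>2 / (8 * \<beta> * \<sigma>\<^sup>2) \<le> A (g x) x" for x
    by (rule final_aux[OF l0 lN sig beta KIA])
  define Bf where "Bf x = (\<Sum>y\<in>UNIV. dc.eta y x * cv.OmC (\<phi> y)) - cv.OmC (m x)" for x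
  have B0: "0 \<le> Bf x" for x
  proof -
    have "cv.Om (m x) \<le> (\<Sum>y\<in>UNIV. dc.eta y x * cv.Om (\<phi> y))"
      unfolding m_def by (rule convex_on_sum[OF _ _ cv.convex_Om]) (auto simp: dc.eta_sum dc.eta_nonneg phiC)
    then show ?thesis unfolding Bf_def OmC_m OmC_phi by simp
  qed
  define PL where "PL \<theta> y = cv.Oc \<theta> + cv.OmC (\<phi> y) - \<theta> \<bullet> \<phi> y" for \<theta> y
  have pl_eq: "proj_loss \<Psi> C \<phi> \<theta> y = ereal (PL \<theta> y)" for \<theta> y
    unfolding proj_loss_def PL_def cv.Omega_conj_eq Omega_def OmC_phi using cv.Psi_fin[OF phiC] phiC by simp
  have PL0: "0 \<le> PL \<theta> y" for \<theta> y
    using cv.ustar(2)[OF phiC, of \<theta> y] unfolding PL_def OmC_phi cv.val_def by (simp add: inner_commute)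
  have sumPL: "(\<Sum>y\<in>UNIV. dc.eta y x * PL \<theta> y) = A \<theta> x + Bf x" for \<theta> x
  proof -
    have "(\<Sum>y\<in>UNIV. dc.eta y x * PL \<theta> y) = (\<Sum>y\<in>UNIV. dc.eta y x) * cv.Oc \<theta>
        + (\<Sum>y\<in>UNIV. dc.eta y x * cv.OmC (\<phi> y)) - (\<Sum>y\<in>UNIV. dc.eta y x * (\<theta> \<bullet> \<phi> y))"
      unfolding PL_def by (simp add: algebra_simps sum.distrib sum_subtractf sum_distrib_right sum_distrib_left)
    also have "(\<Sum>y\<in>UNIV. dc.eta y x * (\<theta> \<bullet> \<phi> y)) = \<theta> \<bullet> m x"
      unfolding m_def by (simp add: inner_sum_right)
    finally show ?thesis unfolding A_def Bf_def using dc.eta_sum by simp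
  qed
  have Am: "(\<lambda>x. ennreal (A (g' x) x)) \<in> borel_measurable MX" if g'[measurable]: "g' \<in> borel_measurable MX" for g'
    unfolding A_def by measurable
  have Bm: "(\<lambda>x. ennreal (Bf x)) \<in> borel_measurable MX"
    unfolding Bf_def using dc.eta_meas by measurable
  define IB where "IB = (\<integral>\<^sup>+x. ennreal (Bf x) \<partial>dc.mu)"
  have SR: "surrogate_risk \<rho> \<Psi> C \<phi> g' = (\<integral>\<^sup>+x. ennreal (A (g' x) x) \<partial>dc.mu) + IB"
    if g'[measurable]: "g' \<in> borel_measurable MX" for g'
  proof -
    have Gm: "(\<lambda>z. ennreal (PL (g' (fst z)) (snd z))) \<in> borel_measurable (MX \<Otimes>\<^sub>M count_space UNIV)"
      unfolding PL_def by measurable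
    have "surrogate_risk \<rho> \<Psi> C \<phi> g' = (\<integral>\<^sup>+z. ennreal (PL (g' (fst z)) (snd z)) \<partial>\<rho>)"
      unfolding surrogate_risk_def pl_eq by simp
    also have "\<dots> = (\<integral>\<^sup>+x. (\<Sum>y\<in>UNIV. ennreal (dc.eta y x) * ennreal (PL (g' x) y)) \<partial>dc.mu)"
      using dc.DEC2[OF Gm] by simp
    also have "\<dots> = (\<integral>\<^sup>+x. ennreal (A (g' x) x) + ennreal (Bf x) \<partial>dc.mu)"
    proof (rule nn_integral_cong)
      fix x
      have "(\<Sum>y\<in>UNIV. ennreal (dc.eta y x) * ennreal (PL (g' x) y)) = ennreal (\<Sum>y\<in>UNIV. dc.eta y x * PL (g' x) y)"
        using dc.eta_nonneg PL0 by (simp add: ennreal_mult[symmetric])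
      also have "\<dots> = ennreal (A (g' x) x) + ennreal (Bf x)" unfolding sumPL using A0 B0 by (simp add: ennreal_plus)
      finally show "(\<Sum>y\<in>UNIV. ennreal (dc.eta y x) * ennreal (PL (g' x) y)) = ennreal (A (g' x) x) + ennreal (Bf x)" .
    qed
    also have "\<dots> = (\<integral>\<^sup>+x. ennreal (A (g' x) x) \<partial>dc.mu) + IB"
      unfolding IB_def by (rule nn_integral_add) (use Am[OF g'] Bm dc.meas_mu in auto)
    finally show ?thesis .
  qed
  have IBfin: "IB \<noteq> \<top>"
  proof -
    obtain K \<theta>0 where K: "\<And>u. u \<in> C \<Longrightarrow> K + u \<bullet> \<theta>0 \<le> cv.Om u" using cv.Om_lower by blast
    define Bb where "Bb = (\<Sum>y\<in>UNIV. \<bar>cv.OmC (\<phi> y)\<bar>) - K + (\<Sum>y\<in>UNIV. norm (\<phi> y)) * norm \<theta>0"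
    have "Bf x \<le> Bb" for x
    proof -
      have 1: "(\<Sum>y\<in>UNIV. dc.eta y x * cv.OmC (\<phi> y)) \<le> (\<Sum>y\<in>UNIV. \<bar>cv.OmC (\<phi> y)\<bar>)"
      proof (rule sum_mono)
        fix y
        have "dc.eta y x * cv.OmC (\<phi> y) \<le> \<bar>dc.eta y x * cv.OmC (\<phi> y)\<bar>" by simp
        also have "\<dots> \<le> 1 * \<bar>cv.OmC (\<phi> y)\<bar>" unfolding abs_mult
          using dc.eta_nonneg dc.eta_le1 by (intro mult_right_mono) auto
        finally show "dc.eta y x * cv.OmC (\<phi> y) \<le> \<bar>cv.OmC (\<phi> y)\<bar>" by simp
      qed
      have nm: "norm (m x) \<le> (\<Sum>y\<in>UNIV. norm (\<phi> y))"
      proof -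
        have "norm (m x) \<le> (\<Sum>y\<in>UNIV. norm (dc.eta y x *\<^sub>R \<phi> y))" unfolding m_def by (rule norm_sum)
        also have "\<dots> \<le> (\<Sum>y\<in>UNIV. norm (\<phi> y))"
          using dc.eta_nonneg dc.eta_le1 by (intro sum_mono) (auto intro: mult_left_le_one_le)
        finally show ?thesis .
      qed
      have "- (m x \<bullet> \<theta>0) \<le> norm (m x) * norm \<theta>0" using norm_cauchy_schwarz[of "- m x" \<theta>0] by simp
      also have "\<dots> \<le> (\<Sum>y\<in>UNIV. norm (\<phi> y)) * norm \<theta>0" using nm by (intro mult_right_mono) auto
      finally have 2: "- (m x \<bullet> \<theta>0) \<le> (\<Sum>y\<in>UNIV. norm (\<phi> y)) * norm \<theta>0" .
      have 3: "K + m x \<bullet> \<theta>0 \<le> cv.OmC (m x)" using K[OF mC] OmC_m by simp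
      show ?thesis unfolding Bf_def Bb_def using 1 2 3 by linarith
    qed
    then have "IB \<le> (\<integral>\<^sup>+x. ennreal Bb \<partial>dc.mu)" unfolding IB_def by (intro nn_integral_mono) (simp add: ennreal_leI)
    also have "\<dots> = ennreal Bb" using mu.emeasure_space_1 by simp
    finally have "IB < \<top>" using ennreal_less_top[of Bb] by (rule le_less_trans)
    then show ?thesis by simp
  qed
  have nearopt: "\<exists>g'\<in>borel_measurable MX. \<forall>x. A (g' x) x < e" if e: "e > 0" for e
  proof -
    obtain D :: "(real^'p) set" where D: "countable D" "\<And>X. open X \<Longrightarrow> X \<noteq> {} \<Longrightarrow> \<exists>d\<in>D. d \<in> X"
      using countable_dense_setE by blast
    have Dne: "D \<noteq> {}" using D(2)[of UNIV] by auto
    define en where "en = from_nat_into D"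
    have ren: "range en = D" unfolding en_def using Dne D(1) by simp
    have ex: "\<exists>n. A (en n) x < e" for x
    proof -
      obtain \<theta> where th: "\<forall>v\<in>C. cv.val \<theta> v \<le> cv.val \<theta> (m x) + e / 2" using cv.sep[OF mC, of "e/2"] e by auto
      have "cv.val \<theta> (cv.ustar \<theta>) \<le> cv.val \<theta> (m x) + e / 2" using th cv.ustar(1) by blast
      then have "A \<theta> x \<le> e / 2" unfolding A_val cv.Oc_def by linarith
      then have in1: "\<theta> \<in> {\<theta>'. A \<theta>' x < e}" using e by simp
      have "open {\<theta>'. A \<theta>' x < e}" unfolding A_def
        by (rule open_Collect_less) (intro continuous_intros cv.Oc_cont)+
      then obtain d where "d \<in> D" "A d x < e" using D(2) in1 by blast
      then have dA: "A d x < e" and "d \<in> range en" using ren by auto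
      then obtain n where "d = en n" by blast
      then show ?thesis using dA by blast
    qed
    define g' where "g' x = en (LEAST n. A (en n) x < e)" for x
    have gA: "A (g' x) x < e" for x unfolding g'_def using LeastI_ex[OF ex[of x]] .
    have "(\<lambda>x. LEAST n. A (en n) x < e) \<in> MX \<rightarrow>\<^sub>M count_space UNIV"
      unfolding A_def by measurable
    then have "g' \<in> borel_measurable MX" unfolding g'_def
      by (rule measurable_compose) simp
    then show ?thesis using gA by blast
  qed
  define INFS where "INFS = (INF g'\<in>borel_measurable MX. surrogate_risk \<rho> \<Psi> C \<phi> g')"
  have INFS_le: "INFS \<le> IB"
  proof (rule ennreal_le_epsilon)
    fix e :: real assume e: "0 < e"
    obtain g' where g': "g' \<in> borel_measurable MX" "\<And>x. A (g' x) x < e" using nearopt[OF e] by blast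
    have "INFS \<le> surrogate_risk \<rho> \<Psi> C \<phi> g'" unfolding INFS_def by (rule INF_lower[OF g'(1)])
    also have "\<dots> = (\<integral>\<^sup>+x. ennreal (A (g' x) x) \<partial>dc.mu) + IB" by (rule SR[OF g'(1)])
    also have "(\<integral>\<^sup>+x. ennreal (A (g' x) x) \<partial>dc.mu) \<le> (\<integral>\<^sup>+x. ennreal e \<partial>dc.mu)"
      using g'(2) by (intro nn_integral_mono ennreal_leI less_imp_le)
    also have "(\<integral>\<^sup>+x. ennreal e \<partial>dc.mu) = ennreal e" using mu.emeasure_space_1 by simp
    finally show "INFS \<le> IB + ennreal e" by (simp add: add.commute)
  qed
  have dS: "(\<integral>\<^sup>+x. ennreal (A (g x) x) \<partial>dc.mu) \<le> excess_surrogate_risk MX \<rho> \<Psi> C \<phi> g"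
  proof -
    have "(\<integral>\<^sup>+x. ennreal (A (g x) x) \<partial>dc.mu) = surrogate_risk \<rho> \<Psi> C \<phi> g - IB"
      unfolding SR[OF g] using IBfin by simp
    also have "\<dots> \<le> surrogate_risk \<rho> \<Psi> C \<phi> g - INFS" by (rule ennreal_minus_mono[OF order_refl INFS_le])
    finally show ?thesis unfolding excess_surrogate_risk_def INFS_def .
  qed

  have pos: "8 * \<beta> * \<sigma>\<^sup>2 > 0" using beta sig by simp
  have "ennreal ((excess_target_risk MX \<rho> L f0)\<^sup>2 / (8 * \<beta> * \<sigma>\<^sup>2))
      \<le> ennreal ((\<integral>x. (l x)\<^sup>2 \<partial>dc.mu) / (8 * \<beta> * \<sigma>\<^sup>2))"
    using sq pos by (intro ennreal_leI divide_right_mono) auto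
  also have "(\<integral>x. (l x)\<^sup>2 \<partial>dc.mu) / (8 * \<beta> * \<sigma>\<^sup>2) = (\<integral>x. (l x)\<^sup>2 / (8 * \<beta> * \<sigma>\<^sup>2) \<partial>dc.mu)" by simp
  also have "ennreal \<dots> = (\<integral>\<^sup>+x. ennreal ((l x)\<^sup>2 / (8 * \<beta> * \<sigma>\<^sup>2)) \<partial>dc.mu)"
    by (rule nn_integral_eq_integral[symmetric]) (use l2i pos in auto)
  also have "\<dots> \<le> (\<integral>\<^sup>+x. ennreal (A (g x) x) \<partial>dc.mu)"
    using la by (intro nn_integral_mono ennreal_leI)
  also have "\<dots> \<le> excess_surrogate_risk MX \<rho> \<Psi> C \<phi> g" by (rule dS)
  finally show ?thesis unfolding \<sigma>_def f0_def .
qed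

end
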